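(* Let $\alpha\in\mathbb{R}$, $\vartheta\in(0,\pi)$, and let $H^+$ be the even part of the bent chain Hamiltonian $H_\vartheta$ described in the context. - If $\alpha\ge0$, then $H^+$ has no negative eigenvalues. - If $\alpha<0$, then $H^+$ has at least one negative eigenvalue. This eigenvalue lies below the lowest spectral band of $H_\vartheta$ and above $-\kappa_0^2$, where $\kappa_0>0$ is the unique positive solution of $\kappa\tanh\kappa\pi=-\alpha/2$.
   Context: Bent chain. Start from an infinite chain of rings indexed by $j\in\mathbb{Z}$, with consecutive rings touching at single points (the vertices, each of degree 4). - For $j\neq0$, each ring consists of two edges (upper and lower arc), each of length $\pi$. - The ring $j=0$ consists of an upper arc of length $\pi+\vartheta$ and a lower arc of length $\pi-\vartheta$, with $\vartheta\in(0,\pi)$. Call this graph $\Gamma_\vartheta$. The operator $H_\vartheta$ on $L^2(\Gamma_\vartheta)$ acts as $-\psi''$ on each edge. Its domain consists of the functions in $W^{2,2}_{\mathrm{loc}}$ with $H_\vartheta\psi\in L^2$ which satisfy at every vertex the $\delta$-coupling with parameter $\alpha$: the function is continuous at $v$ with value $\psi(v)$, and the sum of the four outgoing derivatives equals $\alpha\psi(v)$. The graph has a mirror symmetry: the reflection through the axis passing through the midpoints of the two arcs of ring $0$. This reflection maps ring $j$ to ring $-j$. $H_\vartheta$ commutes with it, and $H^+$ (resp. $H^-$) denotes the part of $H_\vartheta$ in the subspace of even (resp. odd) functions. Equivalently, $H^+$ (resp. $H^-$) is unitarily equivalent to the Laplacian on the half-graph consisting of the rings $j\ge1$ and the halves of the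 two arcs of ring $0$ adjacent to ring $1$, with the same $\delta$-couplings and with Neumann (resp. Dirichlet) conditions at the two arc midpoints. The essential spectrum of $H_\vartheta$ consists of the same spectral bands as for the straight chain (the case $\vartheta=0$). *)

theory Defs
  imports "HOL-Analysis.Analysis"
begin

text \<open>Edges of the ring chain are indexed by (j, b) :: int \<times> bool, where j is the
ring and b = True is the upper arc, b = False the lower arc. Edge (j,b) is
parametrised by x \<in> [0, l(j,b)], running from the vertex v_j (between rings j-1
and j) at x = 0 to the vertex v_(j+1) (between rings j and j+1) at x = l(j,b).\<close>

type_synonym edge = "int \<times> bool"
type_synonym gfun = "edge \<Rightarrow> real \<Rightarrow> real"

definition chain_len :: "real \<Rightarrow> edge \<Rightarrow> real" where
  "chain_len \<theta> e = (if fst e = 0 then (if snd e then pi + \<theta> else pi - \<theta>) else pi)"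

definition L2_graph :: "(edge \<Rightarrow> real) \<Rightarrow> gfun \<Rightarrow> bool" where
  "L2_graph l f \<longleftrightarrow>
     (\<forall>e. f e measurable_on {0..l e} \<and> (\<lambda>x. (f e x)^2) integrable_on {0..l e}) \<and>
     (\<lambda>e. integral {0..l e} (\<lambda>x. (f e x)^2)) summable_on UNIV"

definition ae_eq_graph :: "(edge \<Rightarrow> real) \<Rightarrow> gfun \<Rightarrow> gfun \<Rightarrow> bool" where
  "ae_eq_graph l f g \<longleftrightarrow> (\<forall>e. negligible {x \<in> {0..l e}. f e x \<noteq> g e x})"

definition edge_W22 :: "real \<Rightarrow> (real \<Rightarrow> real) \<Rightarrow> (real \<Rightarrow> real) \<Rightarrow> (real \<Rightarrow> real) \<Rightarrow> bool" where
  "edge_W22 l u u' u'' \<longleftrightarrow>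
     u'' absolutely_integrable_on {0..l} \<and> (\<lambda>x. (u'' x)^2) integrable_on {0..l} \<and>
     (\<forall>x\<in>{0..l}. u' x = u' 0 + integral {0..x} u'' \<and> u x = u 0 + integral {0..x} u')"

text \<open>delta-coupling with parameter alpha at every vertex v_j of the chain
 (ends of edges (j-1,b), starts of edges (j,b)); derivatives taken outward.\<close>
definition delta_cond :: "(edge \<Rightarrow> real) \<Rightarrow> real \<Rightarrow> gfun \<Rightarrow> gfun \<Rightarrow> bool" where
  "delta_cond l \<alpha> u u' \<longleftrightarrow> (\<forall>j::int.
     u (j - 1, True) (l (j - 1, True)) = u (j, True) 0 \<and>
     u (j - 1, False) (l (j - 1, False)) = u (j, True) 0 \<and>
     u (j, False) 0 = u (j, True) 0 \<and>
     u' (j, True) 0 + u' (j, False) 0 - u' (j - 1, True) (l (j - 1, True))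
        - u' (j - 1, False) (l (j - 1, False)) = \<alpha> * u (j, True) 0)"

text \<open>Graph of the operator H: H_rel l alpha psi phi means psi \<in> dom H and
 H psi = phi (as elements of L^2, i.e. almost everywhere).\<close>
definition H_rel :: "(edge \<Rightarrow> real) \<Rightarrow> real \<Rightarrow> gfun \<Rightarrow> gfun \<Rightarrow> bool" where
  "H_rel l \<alpha> \<psi> \<phi> \<longleftrightarrow> L2_graph l \<psi> \<and> L2_graph l \<phi> \<and>
     (\<exists>\<psi>' \<psi>''. (\<forall>e. edge_W22 (l e) (\<psi> e) (\<psi>' e) (\<psi>'' e)) \<and>
        ae_eq_graph l \<phi> (\<lambda>e x. - \<psi>'' e x) \<and> delta_cond l \<alpha> \<psi> \<psi>')"

text \<open>Resolvent set / (real part of the) spectrum: H - mu bijective from dom H onto L^2.\<close>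
definition chain_resolvent :: "(edge \<Rightarrow> real) \<Rightarrow> real \<Rightarrow> real set" where
  "chain_resolvent l \<alpha> = {\<mu>.
     (\<forall>f. L2_graph l f \<longrightarrow> (\<exists>\<psi>. H_rel l \<alpha> \<psi> (\<lambda>e x. f e x + \<mu> * \<psi> e x))) \<and>
     (\<forall>\<psi>. H_rel l \<alpha> \<psi> (\<lambda>e x. \<mu> * \<psi> e x) \<longrightarrow> ae_eq_graph l \<psi> (\<lambda>e x. 0))}"

definition chain_spectrum :: "(edge \<Rightarrow> real) \<Rightarrow> real \<Rightarrow> real set" where
  "chain_spectrum l \<alpha> = - chain_resolvent l \<alpha>"

definition even_fn :: "(edge \<Rightarrow> real) \<Rightarrow> gfun \<Rightarrow> bool" where
  "even_fn l \<psi> \<longleftrightarrow> (\<forall>j b x. x \<in> {0..l (j, b)} \<longrightarrow> \<psi> (- j, b) (l (j, b) - x) = \<psi> (j, b) x)"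

definition even_eigenvalue :: "real \<Rightarrow> real \<Rightarrow> real \<Rightarrow> bool" where
  "even_eigenvalue \<theta> \<alpha> E \<longleftrightarrow> (\<exists>\<psi>.
     H_rel (chain_len \<theta>) \<alpha> \<psi> (\<lambda>e x. E * \<psi> e x) \<and> even_fn (chain_len \<theta>) \<psi> \<and>
     \<not> ae_eq_graph (chain_len \<theta>) \<psi> (\<lambda>e x. 0))"

end

theory Submission
  imports Defs
begin


lemma series_CS:
  fixes a x :: "nat \<Rightarrow> real"
  assumes sa: "summable a" and a0: "\<And>n. 0 \<le> a n" and xb: "\<And>n. \<bar>x n\<bar> \<le> M"
  shows "(\<Sum>n. a n * x n)^2 \<le> (\<Sum>n. a n) * (\<Sum>n. a n * (x n)^2)"
proof -
  have s1: "summable (\<lambda>n. a n * x n)"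
  proof (rule summable_comparison_test[of _ "\<lambda>n. M * a n"])
    show "\<exists>N. \<forall>n\<ge>N. norm (a n * x n) \<le> M * a n"
    proof (intro exI allI impI)
      fix n show "norm (a n * x n) \<le> M * a n"
        using xb[of n] a0[of n] by (simp add: abs_mult) (metis mult.commute mult_left_mono)
    qed
  qed (auto intro!: summable_mult sa)
  have s2: "summable (\<lambda>n. a n * (x n)^2)"
  proof (rule summable_comparison_test[of _ "\<lambda>n. M^2 * a n"])
    show "\<exists>N. \<forall>n\<ge>N. norm (a n * (x n)\<^sup>2) \<le> M\<^sup>2 * a n"
    proof (intro exI allI impI)
      fix n
      have "(x n)^2 \<le> M^2" using xb[of n] by (metis abs_le_square_iff abs_of_nonneg abs_ge_zero order_trans)
      thus "norm (a n * (x n)\<^sup>2) \<le> M\<^sup>2 * a n" using a0[of n]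
        by (simp add: abs_mult mult.commute mult_left_mono)
    qed
  qed (auto intro!: summable_mult sa)
  define A where "A = (\<Sum>n. a n)"
  define S where "S = (\<Sum>n. a n * x n)"
  define T where "T = (\<Sum>n. a n * (x n)^2)"
  have eq: "(\<lambda>n. a n * (A * x n - S)^2) = (\<lambda>n. A^2 * (a n * (x n)^2) - 2*A*S * (a n * x n) + S^2 * a n)"
    by (auto simp: power2_eq_square algebra_simps)
  have sm: "(\<lambda>n. a n * (A * x n - S)^2) sums (A^2 * T - 2*A*S*S + S^2*A)"
    unfolding eq
    by (intro sums_add sums_diff sums_mult) (auto simp: A_def S_def T_def intro!: summable_sums sa s1 s2)
  have "0 \<le> A^2 * T - 2*A*S*S + S^2*A"
    by (rule sums_le[OF _ sums_zero sm]) (auto simp: a0)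
  hence key: "0 \<le> A * (A*T - S^2)" by (simp add: power2_eq_square algebra_simps)
  have A0: "A \<ge> 0" unfolding A_def by (intro suminf_nonneg sa a0)
  show ?thesis
  proof (cases "A = 0")
    case True
    hence "\<forall>n. a n = 0" using suminf_eq_zero_iff[OF sa] a0 A_def by auto
    thus ?thesis by simp
  next
    case False
    with A0 have "A > 0" by simp
    with key have "A*T - S^2 \<ge> 0" by (simp add: zero_le_mult_iff)
    thus ?thesis by (simp add: A_def S_def T_def)
  qed
qed

lemma term_le_infsum:
  fixes h :: "'a \<Rightarrow> real"
  assumes "(\<lambda>j. (h j)^2) summable_on UNIV"
  shows "(h j)^2 \<le> infsum (\<lambda>j. (h j)^2) UNIV"
proof -
  have "sum (\<lambda>j. (h j)^2) {j} \<le> infsum (\<lambda>j. (h j)^2) UNIV"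
    by (rule finite_sum_le_infsum[OF assms]) auto
  thus ?thesis by simp
qed

lemma disc_forward:
  fixes h :: "int \<Rightarrow> real" and q :: real
  assumes q0: "0 < q" and q1: "q < 1" and hs: "(\<lambda>j. (h j)^2) summable_on UNIV"
  shows "\<exists>w. (\<forall>j. w j = h j + q * w (j+1)) \<and> (\<lambda>j. (w j)^2) summable_on UNIV"
proof -
  define B where "B = infsum (\<lambda>j. (h j)^2) UNIV"
  have hB: "\<bar>h j\<bar> \<le> sqrt B" for j
    using term_le_infsum[OF hs, of j] unfolding B_def by (metis real_sqrt_abs real_sqrt_le_mono)
  have B0: "B \<ge> 0" unfolding B_def by (intro infsum_nonneg) auto
  have sg: "summable (\<lambda>n. q^n)" using q0 q1 by (intro summable_geometric) auto
  have ss: "summable (\<lambda>n. q^n * h (j + int n))" for j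
    by (rule summable_comparison_test[of _ "\<lambda>n. sqrt B * q^n"])
       (use q0 q1 hB in \<open>auto intro!: summable_mult sg simp: abs_mult mult.commute mult_right_mono\<close>)
  define w where "w j = (\<Sum>n. q^n * h (j + int n))" for j
  have rec: "w j = h j + q * w (j+1)" for j
  proof -
    have "(\<Sum>n. q^(Suc n) * h (j + int (Suc n))) = w j - h j"
      using suminf_split_head[OF ss[of j]] by (simp add: w_def)
    moreover have "(\<Sum>n. q^(Suc n) * h (j + int (Suc n))) = q * w (j+1)"
    proof -
      have "(\<lambda>n. q^(Suc n) * h (j + int (Suc n))) = (\<lambda>n. q * (q^n * h ((j+1) + int n)))"
        by (auto simp: algebra_simps)
      thus ?thesis using suminf_mult[OF ss[of "j+1"], of q] by (simp add: w_def)
    qed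
    ultimately show ?thesis by simp
  qed
  define A where "A = (\<Sum>n. q^n)"
  have A0: "A \<ge> 0" unfolding A_def using q0 by (intro suminf_nonneg sg) auto
  have cs: "(w j)^2 \<le> A * (\<Sum>n. q^n * (h (j + int n))^2)" for j
    unfolding w_def A_def by (rule series_CS[OF sg _ hB]) (use q0 in auto)
  have ss2: "summable (\<lambda>n. q^n * (h (j + int n))^2)" for j
    by (rule summable_comparison_test[of _ "\<lambda>n. B * q^n"])
       (use q0 q1 term_le_infsum[OF hs] in \<open>auto intro!: summable_mult2 sg simp: abs_mult mult.commute mult_right_mono B_def\<close>)
  have bd: "sum (\<lambda>j. (w j)^2) F \<le> A * (A * B)" if F: "finite F" for F
  proof -
    have "sum (\<lambda>j. (w j)^2) F \<le> sum (\<lambda>j. A * (\<Sum>n. q^n * (h (j + int n))^2)) F"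
      by (intro sum_mono cs)
    also have "\<dots> = A * (\<Sum>n. \<Sum>j\<in>F. q^n * (h (j + int n))^2)"
      by (simp add: sum_distrib_left[symmetric] suminf_sum[OF ss2, symmetric])
    also have "\<dots> \<le> A * (\<Sum>n. q^n * B)"
    proof (intro mult_left_mono A0 suminf_le allI)
      fix n
      have "(\<Sum>j\<in>F. (h (j + int n))^2) = (\<Sum>i\<in>(\<lambda>j. j + int n) ` F. (h i)^2)"
        by (subst sum.reindex) (auto simp: inj_on_def)
      also have "\<dots> \<le> B" unfolding B_def
        by (rule finite_sum_le_infsum[OF hs]) (use F in auto)
      finally show "(\<Sum>j\<in>F. q^n * (h (j + int n))^2) \<le> q^n * B"
        using q0 by (simp add: sum_distrib_left[symmetric] mult_left_mono)
      show "summable (\<lambda>n. \<Sum>j\<in>F. q^n * (h (j + int n))^2)" by (intro summable_sum ss2)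
      show "summable (\<lambda>n. q^n * B)" by (intro summable_mult2 sg)
    qed
    also have "\<dots> = A * (A * B)" using suminf_mult2[OF sg, of B] by (simp add: A_def mult.commute)
    finally show ?thesis .
  qed
  have "(\<lambda>j. (w j)^2) summable_on UNIV"
    by (rule nonneg_bdd_above_summable_on) (auto intro!: bdd_aboveI[where M="A*(A*B)"] bd)
  with rec show ?thesis by blast
qed

lemma disc_backward:
  fixes h :: "int \<Rightarrow> real" and q :: real
  assumes q0: "0 < q" and q1: "q < 1" and hs: "(\<lambda>j. (h j)^2) summable_on UNIV"
  shows "\<exists>w. (\<forall>j. w j = h j + q * w (j-1)) \<and> (\<lambda>j. (w j)^2) summable_on UNIV"
proof -
  have "(\<lambda>j. (h (- j))^2) summable_on UNIV"
    using summable_on_reindex_bij_betw[of uminus "UNIV::int set" UNIV "\<lambda>j. (h j)^2"] hs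
    by (simp add: bij_betw_def inj_def surj_def)
  from disc_forward[OF q0 q1 this] obtain w where
    w: "\<forall>j. w j = h (- j) + q * w (j+1)" "(\<lambda>j. (w j)^2) summable_on UNIV" by blast
  have "(\<lambda>j. (w (- j))^2) summable_on UNIV"
    using summable_on_reindex_bij_betw[of uminus "UNIV::int set" UNIV "\<lambda>j. (w j)^2"] w(2)
    by (simp add: bij_betw_def inj_def surj_def)
  moreover have "\<forall>j. w (-j) = h j + q * w (- (j - 1))"
  proof
    fix j show "w (-j) = h j + q * w (- (j - 1))"
      using w(1)[rule_format, of "-j"] by (simp add: algebra_simps)
  qed
  ultimately show ?thesis by (intro exI[of _ "\<lambda>j. w (-j)"]) auto
qed

lemma disc_solve:
  fixes g :: "int \<Rightarrow> real" and D :: real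
  assumes D1: "D > 1" and gs: "(\<lambda>j. (g j)^2) summable_on UNIV"
  shows "\<exists>u. (\<forall>j. u (j+1) + u (j-1) - 2 * D * u j = g j) \<and> (\<lambda>j. (u j)^2) summable_on UNIV"
proof -
  define q where "q = D - sqrt (D^2 - 1)"
  have sq: "sqrt (D^2 - 1) < D"
  proof -
    have "sqrt (D^2 - 1) < sqrt (D^2)" by (rule real_sqrt_less_mono) simp
    thus ?thesis using D1 by simp
  qed
  have sq0: "sqrt (D^2 - 1) > 0" using D1 by (simp add: power_less_one_iff)
  have q0: "q > 0" using sq by (simp add: q_def)
  have q1: "q < 1"
  proof -
    have "(D-1)^2 < D^2 - 1" using D1 by (simp add: power2_eq_square algebra_simps)
    hence "sqrt ((D-1)^2) < sqrt (D^2 - 1)" by (rule real_sqrt_less_mono)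
    thus ?thesis using D1 by (simp add: q_def)
  qed
  have qq: "q^2 + 1 = 2 * D * q"
  proof -
    have "(sqrt (D^2-1))^2 = D^2 - 1" using D1 by (simp add: abs_square_le_1)
    thus ?thesis unfolding q_def by (simp add: power2_eq_square algebra_simps)
  qed
  have "(\<lambda>j. (- q * g j)^2) summable_on UNIV"
    using summable_on_cmult_right[OF gs, of "q^2"] by (simp add: power_mult_distrib)
  from disc_forward[OF q0 q1 this] obtain w where
    w: "\<forall>j. w j = - q * g j + q * w (j+1)" "(\<lambda>j. (w j)^2) summable_on UNIV" by blast
  from disc_backward[OF q0 q1 w(2)] obtain u where
    u: "\<forall>j. u j = w j + q * u (j-1)" "(\<lambda>j. (u j)^2) summable_on UNIV" by blast
  have "u (j+1) + u (j-1) - 2 * D * u j = g j" for j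
  proof -
    have e1: "w j = u j - q * u (j-1)" using u(1)[rule_format, of j] by linarith
    have e2: "w (j+1) = u (j+1) - q * u j" using u(1)[rule_format, of "j+1"] by simp
    have "w j = - q * g j + q * w (j+1)" using w(1) by blast
    hence "u j - q * u (j-1) = - q * g j + q * (u (j+1) - q * u j)" by (simp only: e1 e2)
    hence "q * (u (j+1) + u (j-1) - 2 * D * u j - g j) = (1 + q^2 - 2*D*q) * u j"
      by (simp add: algebra_simps power2_eq_square)
    hence "q * (u (j+1) + u (j-1) - 2 * D * u j - g j) = 0" using qq by simp
    thus ?thesis using q0 by simp
  qed
  with u(2) show ?thesis by blast
qed


lemma FTC_sub:
  fixes F f :: "real \<Rightarrow> real"
  assumes x: "x \<in> {0..l}"
    and d: "\<And>t. t \<in> {0..l} \<Longrightarrow> (F has_real_derivative f t) (at t within {0..l})"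
  shows "(f has_integral (F x - F 0)) {0..x}"
proof (rule fundamental_theorem_of_calculus)
  show "0 \<le> x" using x by simp
  fix t assume t: "t \<in> {0..x}"
  hence "t \<in> {0..l}" using x by auto
  from d[OF this] have "(F has_vector_derivative f t) (at t within {0..l})"
    by (simp add: has_real_derivative_iff_has_vector_derivative)
  thus "(F has_vector_derivative f t) (at t within {0..x})"
    by (rule has_vector_derivative_within_subset) (use x in auto)
qed

lemma W22_smooth:
  fixes \<psi> p qq :: "real \<Rightarrow> real"
  assumes d1: "\<And>x. x \<in> {0..l} \<Longrightarrow> (\<psi> has_real_derivative p x) (at x within {0..l})"
    and d2: "\<And>x. x \<in> {0..l} \<Longrightarrow> (p has_real_derivative qq x) (at x within {0..l})"
    and c: "continuous_on {0..l} qq"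
  shows "edge_W22 l \<psi> p qq"
  unfolding edge_W22_def
proof (intro conjI ballI)
  show "qq absolutely_integrable_on {0..l}" by (rule absolutely_integrable_continuous_real[OF c])
  show "(\<lambda>x. (qq x)\<^sup>2) integrable_on {0..l}"
    by (intro integrable_continuous_real continuous_intros c)
  fix x assume x: "x \<in> {0..l}"
  show "p x = p 0 + integral {0..x} qq" using FTC_sub[OF x d2] by (simp add: integral_unique)
  show "\<psi> x = \<psi> 0 + integral {0..x} p" using FTC_sub[OF x d1] by (simp add: integral_unique)
qed

lemma sq_diff_le: "(a - b)^2 \<le> 2*a^2 + 2*(b::real)^2"
proof -
  have "0 \<le> (a+b)^2" by simp
  thus ?thesis by (simp add: power2_eq_square algebra_simps)
qed

lemma sq_add_le: "(a + b)^2 \<le> 2*a^2 + 2*(b::real)^2"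
  using sq_diff_le[of a "-b"] by simp

lemma sets_lebesgue_interval [simp]: "{a..b::real} \<in> sets lebesgue"
  by (simp add: borel_closed)

lemma W22_forced:
  fixes \<psi> p R f :: "real \<Rightarrow> real" and k :: real
  assumes fi: "f absolutely_integrable_on {0..l}"
    and fsq: "(\<lambda>x. (f x)^2) integrable_on {0..l}"
    and d1: "\<And>x. x \<in> {0..l} \<Longrightarrow> (\<psi> has_real_derivative p x) (at x within {0..l})"
    and d2: "\<And>x. x \<in> {0..l} \<Longrightarrow> (R has_real_derivative k^2 * \<psi> x) (at x within {0..l})"
    and pR: "\<And>x. x \<in> {0..l} \<Longrightarrow> p x = R x - integral {0..x} f"
  shows "edge_W22 l \<psi> p (\<lambda>x. k^2 * \<psi> x - f x)"
  unfolding edge_W22_def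
proof (intro conjI ballI)
  have cpsi: "continuous_on {0..l} \<psi>"
    unfolding continuous_on_eq_continuous_within
    using d1 has_derivative_continuous unfolding has_field_derivative_def by blast
  have a1: "(\<lambda>x. k^2 * \<psi> x) absolutely_integrable_on {0..l}"
    by (intro absolutely_integrable_continuous_real continuous_intros cpsi)
  show "(\<lambda>x. k^2 * \<psi> x - f x) absolutely_integrable_on {0..l}"
    by (intro set_integral_diff(1) a1 fi)
  have mf: "f \<in> borel_measurable (lebesgue_on {0..l})"
    using fi by (simp add: absolutely_integrable_measurable_real')
  have mpsi: "\<psi> \<in> borel_measurable (lebesgue_on {0..l})"
    using cpsi by (simp add: continuous_imp_measurable_on_sets_lebesgue)
  have i2: "(\<lambda>x. 2 * (k^2 * \<psi> x)^2 + 2 * (f x)^2) integrable_on {0..l}"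
  proof (rule integrable_add)
    show "(\<lambda>x. 2 * (k\<^sup>2 * \<psi> x)\<^sup>2) integrable_on {0..l}"
      by (intro integrable_continuous_real continuous_intros cpsi)
    show "(\<lambda>x. 2 * (f x)\<^sup>2) integrable_on {0..l}"
      using integrable_on_cmult_left[OF fsq, of 2] by simp
  qed
  show "(\<lambda>x. (k^2 * \<psi> x - f x)\<^sup>2) integrable_on {0..l}"
  proof (rule measurable_bounded_by_integrable_imp_integrable_real[OF _ i2])
    show "(\<lambda>x. (k^2 * \<psi> x - f x)\<^sup>2) \<in> borel_measurable (lebesgue_on {0..l})"
      using mf mpsi by measurable
    fix x show "\<bar>(k^2 * \<psi> x - f x)\<^sup>2\<bar> \<le> 2 * (k^2 * \<psi> x)^2 + 2 * (f x)^2"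
      using sq_diff_le[of "k^2 * \<psi> x" "f x"] by simp
  qed simp
  fix x assume x: "x \<in> {0..l}"
  have fx: "f integrable_on {0..x}"
  proof -
    have "f absolutely_integrable_on {0..x}"
      by (rule absolutely_integrable_on_subinterval[OF fi]) (use x in auto)
    thus ?thesis by (rule set_lebesgue_integral_eq_integral(1))
  qed
  have h1: "((\<lambda>t. k^2 * \<psi> t) has_integral (R x - R 0)) {0..x}" by (rule FTC_sub[OF x d2])
  have "integral {0..x} (\<lambda>t. k^2 * \<psi> t - f t) = (R x - R 0) - integral {0..x} f"
    using h1 fx by (subst integral_diff) (auto simp del: integral_mult_right simp add: integral_unique has_integral_integrable)
  moreover have "p 0 = R 0" using pR[of 0] x by simp
  ultimately show "p x = p 0 + integral {0..x} (\<lambda>x. k^2 * \<psi> x - f x)"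
    using pR[OF x] by simp
  show "\<psi> x = \<psi> 0 + integral {0..x} p" using FTC_sub[OF x d1] by (simp add: integral_unique)
qed


lemma homog_solution:
  fixes u u' u'' :: "real \<Rightarrow> real"
  assumes l: "0 < l" and k: "0 < k"
    and W: "edge_W22 l u u' u''"
    and ae: "negligible {x \<in> {0..l}. - (k^2) * u x \<noteq> - u'' x}"
  shows "\<forall>x\<in>{0..l}. u x = (u 0 * sinh (k*(l-x)) + u l * sinh (k*x)) / sinh (k*l)"
    "u' 0 = k * (u l - cosh (k*l) * u 0) / sinh (k*l)"
    "u' l = k * (cosh (k*l) * u l - u 0) / sinh (k*l)"
proof -
  have ai: "u'' absolutely_integrable_on {0..l}" using W unfolding edge_W22_def by blast
  have e1: "\<forall>x\<in>{0..l}. u' x = u' 0 + integral {0..x} u''" using W unfolding edge_W22_def by blast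
  have e2: "\<forall>x\<in>{0..l}. u x = u 0 + integral {0..x} u'" using W unfolding edge_W22_def by blast
  have ii: "u'' integrable_on {0..l}" by (rule set_lebesgue_integral_eq_integral(1)[OF ai])
  have cu': "continuous_on {0..l} u'"
  proof -
    have "continuous_on {0..l} (\<lambda>x. u' 0 + integral {0..x} u'')"
      by (intro continuous_intros indefinite_integral_continuous_1 ii)
    thus ?thesis by (rule continuous_on_eq) (metis e1)
  qed
  have cu: "continuous_on {0..l} u"
  proof -
    have "continuous_on {0..l} (\<lambda>x. u 0 + integral {0..x} u')"
      by (intro continuous_intros indefinite_integral_continuous_1 integrable_continuous_real cu')
    thus ?thesis by (rule continuous_on_eq) (metis e2)
  qed
  have e1': "u' x = u' 0 + integral {0..x} (\<lambda>t. k^2 * u t)" if x: "x \<in> {0..l}" for x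
  proof -
    have "integral {0..x} u'' = integral {0..x} (\<lambda>t. k^2 * u t)"
    proof (rule integral_spike[OF ae])
      fix t assume "t \<in> {0..x} - {x \<in> {0..l}. - (k^2) * u x \<noteq> - u'' x}"
      thus "k^2 * u t = u'' t" using x by auto
    qed
    thus ?thesis using e1 x by metis
  qed
  have du': "(u' has_real_derivative k^2 * u x) (at x within {0..l})" if x: "x \<in> {0..l}" for x
  proof -
    have "((\<lambda>y. integral {0..y} (\<lambda>t. k^2 * u t)) has_real_derivative k^2 * u x) (at x within {0..l})"
      unfolding has_real_derivative_iff_has_vector_derivative
      by (intro integral_has_vector_derivative continuous_intros cu x)
    from DERIV_add[OF DERIV_const[of "u' 0"] this]
    have "((\<lambda>y. u' 0 + integral {0..y} (\<lambda>t. k^2 * u t)) has_real_derivative k^2 * u x) (at x within {0..l})"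
      by simp
    thus ?thesis
      by (rule has_field_derivative_transform_within[where d=1]) (use x in \<open>auto simp del: integral_mult_right intro: e1'[symmetric]\<close>)
  qed
  have e2': "u x = u 0 + integral {0..x} u'" if "x \<in> {0..l}" for x using e2 that by blast
  have du: "(u has_real_derivative u' x) (at x within {0..l})" if x: "x \<in> {0..l}" for x
  proof -
    have "((\<lambda>y. integral {0..y} u') has_real_derivative u' x) (at x within {0..l})"
      unfolding has_real_derivative_iff_has_vector_derivative
      by (intro integral_has_vector_derivative cu' x)
    from DERIV_add[OF DERIV_const[of "u 0"] this]
    have "((\<lambda>y. u 0 + integral {0..y} u') has_real_derivative u' x) (at x within {0..l})"
      by simp
    thus ?thesis
      by (rule has_field_derivative_transform_within[where d=1]) (use x in \<open>auto intro: e2'[symmetric]\<close>)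
  qed
  define v where "v x = u 0 * cosh (k*x) + (u' 0 / k) * sinh (k*x)" for x
  define v' where "v' x = u 0 * k * sinh (k*x) + u' 0 * cosh (k*x)" for x
  have dv: "(v has_real_derivative v' x) (at x within {0..l})" for x
    unfolding v_def v'_def using k by (auto intro!: derivative_eq_intros)
  have dv': "(v' has_real_derivative k^2 * v x) (at x within {0..l})" for x
    unfolding v_def v'_def using k by (auto intro!: derivative_eq_intros simp: power2_eq_square algebra_simps)
  define w where "w x = u x - v x" for x
  define w' where "w' x = u' x - v' x" for x
  have dw: "(w has_real_derivative w' x) (at x within {0..l})" if "x \<in> {0..l}" for x
    unfolding w_def w'_def using du[OF that] dv[of x] by (intro DERIV_diff)
  have dw': "(w' has_real_derivative k^2 * w x) (at x within {0..l})" if "x \<in> {0..l}" for x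
    unfolding w_def w'_def using DERIV_diff[OF du'[OF that] dv'[of x]] by (simp add: algebra_simps)
  have w0: "w 0 = 0" "w' 0 = 0" unfolding w_def w'_def v_def v'_def by auto
  define z where "z x = (w' x + k * w x) * exp (- k * x)" for x
  have "\<exists>c. \<forall>x\<in>{0..l}. z x = c"
  proof (rule has_field_derivative_zero_constant)
    fix x assume x: "x \<in> {0..l}"
    show "(z has_real_derivative 0) (at x within {0..l})"
      unfolding z_def by (auto intro!: derivative_eq_intros dw[OF x] dw'[OF x] simp: power2_eq_square algebra_simps)
  qed simp
  then obtain c where "\<forall>x\<in>{0..l}. z x = c" by blast
  moreover have "z 0 = 0" unfolding z_def using w0 by simp
  ultimately have zz: "w' x + k * w x = 0" if "x \<in> {0..l}" for x
  proof -
    have "z x = 0" using that l \<open>\<forall>x\<in>{0..l}. z x = c\<close> \<open>z 0 = 0\<close> by force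
    thus ?thesis by (simp add: z_def)
  qed
  define y where "y x = w x * exp (k * x)" for x
  have "\<exists>c. \<forall>x\<in>{0..l}. y x = c"
  proof (rule has_field_derivative_zero_constant)
    fix x assume x: "x \<in> {0..l}"
    have "(y has_real_derivative w' x * exp (k * x) + w x * (exp (k * x) * k)) (at x within {0..l})"
      unfolding y_def by (auto intro!: derivative_eq_intros dw[OF x])
    moreover have "w' x * exp (k * x) + w x * (exp (k * x) * k) = 0"
    proof -
      have "w' x * exp (k * x) + w x * (exp (k * x) * k) = (w' x + k * w x) * exp (k * x)"
        by (simp add: algebra_simps)
      thus ?thesis using zz[OF x] by simp
    qed
    ultimately show "(y has_real_derivative 0) (at x within {0..l})" by simp
  qed simp
  then obtain c2 where "\<forall>x\<in>{0..l}. y x = c2" by blast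
  moreover have "y 0 = 0" unfolding y_def using w0 by simp
  ultimately have ww: "w x = 0" if "x \<in> {0..l}" for x
  proof -
    have "y x = 0" using that l \<open>\<forall>x\<in>{0..l}. y x = c2\<close> \<open>y 0 = 0\<close> by force
    thus ?thesis by (simp add: y_def)
  qed
  have uv: "u x = v x" if "x \<in> {0..l}" for x using ww[OF that] by (simp add: w_def)
  have uv': "u' x = v' x" if "x \<in> {0..l}" for x using ww[OF that] zz[OF that] by (simp add: w_def w'_def)
  have S: "sinh (k*l) > 0" using k l by simp
  have CS: "(cosh (k*l))^2 = (sinh (k*l))^2 + 1" by (rule cosh_square_eq)
  have lin: "l \<in> {0..l}" using l by simp
  have ul: "u l = u 0 * cosh (k*l) + (u' 0 / k) * sinh (k*l)" using uv[OF lin] by (simp add: v_def)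
  have u'0: "u' 0 = k * (u l - cosh (k*l) * u 0) / sinh (k*l)"
    using ul S k l by (simp add: field_simps)
  show "u' 0 = k * (u l - cosh (k*l) * u 0) / sinh (k*l)" by (rule u'0)
  show "\<forall>x\<in>{0..l}. u x = (u 0 * sinh (k*(l-x)) + u l * sinh (k*x)) / sinh (k*l)"
  proof
    fix x assume x: "x \<in> {0..l}"
    have A: "sinh (k*(l-x)) = sinh (k*l) * cosh (k*x) - cosh (k*l) * sinh (k*x)"
      by (simp add: right_diff_distrib sinh_diff)
    have B: "u x = u 0 * cosh (k*x) + ((u l - cosh (k*l) * u 0) / sinh (k*l)) * sinh (k*x)"
      using uv[OF x] u'0 k by (simp add: v_def)
    show "u x = (u 0 * sinh (k*(l-x)) + u l * sinh (k*x)) / sinh (k*l)"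
      unfolding A using k l by (subst B) (simp add: field_simps)
  qed
  show "u' l = k * (cosh (k*l) * u l - u 0) / sinh (k*l)"
    using uv'[OF lin] u'0 S k l CS by (simp add: v'_def field_simps power2_eq_square)
qed


lemma sinh_gt_self: "y > 0 \<Longrightarrow> sinh y > (y::real)"
proof -
  assume y: "y > 0"
  have "(\<lambda>t. sinh t - t) 0 < (\<lambda>t. sinh t - t) y"
  proof (rule DERIV_pos_imp_increasing_open[OF y])
    fix x :: real assume x: "0 < x" "x < y"
    have "((\<lambda>t. sinh t - t) has_real_derivative cosh x - 1) (at x)"
      by (auto intro!: derivative_eq_intros)
    moreover have "cosh x - 1 > 0" using cosh_real_ge_1[of x] cosh_real_one_iff[of x] x by linarith
    ultimately show "\<exists>d. ((\<lambda>t. sinh t - t) has_real_derivative d) (at x) \<and> 0 < d" by blast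
  qed (intro continuous_intros)
  thus ?thesis by simp
qed

lemma cosh_gt_1: "y \<noteq> 0 \<Longrightarrow> cosh y > (1::real)"
  using cosh_real_ge_1[of y] cosh_real_one_iff[of y] by linarith

lemma int_S1sq:
  fixes k :: real assumes k: "k > 0"
  shows "((\<lambda>x. (sinh (k*(pi-x)))^2) has_integral (sinh (k*pi) * cosh (k*pi) / (2*k) - pi/2)) {0..pi}"
proof -
  define G where "G x = - sinh (2*k*(pi-x)) / (4*k) - x/2" for x
  have "((\<lambda>x. (sinh (k*(pi-x)))^2) has_integral (G pi - G 0)) {0..pi}"
  proof (rule fundamental_theorem_of_calculus)
    fix x assume "x \<in> {0..pi}"
    have "(G has_real_derivative cosh (2*k*(pi-x)) / 2 - 1/2) (at x within {0..pi})"
      unfolding G_def using k by (auto intro!: derivative_eq_intros simp: field_simps)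
    moreover have "cosh (2*k*(pi-x)) / 2 - 1/2 = (sinh (k*(pi-x)))^2"
      using cosh_double[of "k*(pi-x)"] cosh_square_eq[of "k*(pi-x)"] by (simp add: mult.assoc field_simps)
    ultimately show "(G has_vector_derivative (sinh (k*(pi-x)))^2) (at x within {0..pi})"
      by (simp add: has_real_derivative_iff_has_vector_derivative)
  qed simp
  moreover have "G pi - G 0 = sinh (k*pi) * cosh (k*pi) / (2*k) - pi/2"
    unfolding G_def using k sinh_double[of "k*pi"] by (simp add: field_simps mult.assoc)
  ultimately show ?thesis by simp
qed

lemma int_S2sq:
  fixes k :: real assumes k: "k > 0"
  shows "((\<lambda>x. (sinh (k*x))^2) has_integral (sinh (k*pi) * cosh (k*pi) / (2*k) - pi/2)) {0..pi}"
proof -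
  define G where "G x = sinh (2*k*x) / (4*k) - x/2" for x
  have "((\<lambda>x. (sinh (k*x))^2) has_integral (G pi - G 0)) {0..pi}"
  proof (rule fundamental_theorem_of_calculus)
    fix x assume "x \<in> {0..pi}"
    have "(G has_real_derivative cosh (2*k*x) / 2 - 1/2) (at x within {0..pi})"
      unfolding G_def using k by (auto intro!: derivative_eq_intros simp: field_simps)
    moreover have "cosh (2*k*x) / 2 - 1/2 = (sinh (k*x))^2"
      using cosh_double[of "k*x"] cosh_square_eq[of "k*x"] by (simp add: mult.assoc field_simps)
    ultimately show "(G has_vector_derivative (sinh (k*x))^2) (at x within {0..pi})"
      by (simp add: has_real_derivative_iff_has_vector_derivative)
  qed simp
  moreover have "G pi - G 0 = sinh (k*pi) * cosh (k*pi) / (2*k) - pi/2"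
    unfolding G_def using k sinh_double[of "k*pi"] by (simp add: field_simps mult.assoc)
  ultimately show ?thesis by simp
qed

lemma int_S12:
  fixes k :: real assumes k: "k > 0"
  shows "((\<lambda>x. sinh (k*(pi-x)) * sinh (k*x)) has_integral (pi * cosh (k*pi) / 2 - sinh (k*pi) / (2*k))) {0..pi}"
proof -
  define G where "G x = x * cosh (k*pi) / 2 + sinh (k*(pi - 2*x)) / (4*k)" for x
  have "((\<lambda>x. sinh (k*(pi-x)) * sinh (k*x)) has_integral (G pi - G 0)) {0..pi}"
  proof (rule fundamental_theorem_of_calculus)
    fix x assume "x \<in> {0..pi}"
    have "(G has_real_derivative cosh (k*pi) / 2 - cosh (k*(pi - 2*x)) / 2) (at x within {0..pi})"
      unfolding G_def using k by (auto intro!: derivative_eq_intros simp: field_simps)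
    moreover have "cosh (k*pi) / 2 - cosh (k*(pi - 2*x)) / 2 = sinh (k*(pi-x)) * sinh (k*x)"
    proof -
      have a: "cosh (k*pi) = cosh (k*(pi-x)) * cosh (k*x) + sinh (k*(pi-x)) * sinh (k*x)"
        using cosh_add[of "k*(pi-x)" "k*x"] by (simp add: algebra_simps)
      have b: "cosh (k*(pi-2*x)) = cosh (k*(pi-x)) * cosh (k*x) - sinh (k*(pi-x)) * sinh (k*x)"
        using cosh_diff[of "k*(pi-x)" "k*x"] by (simp add: algebra_simps)
      show ?thesis unfolding a b by (simp add: field_simps)
    qed
    ultimately show "(G has_vector_derivative sinh (k*(pi-x)) * sinh (k*x)) (at x within {0..pi})"
      by (simp add: has_real_derivative_iff_has_vector_derivative)
  qed simp
  moreover have "G pi - G 0 = pi * cosh (k*pi) / 2 - sinh (k*pi) / (2*k)"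
    unfolding G_def using k by (simp add: field_simps)
  ultimately show ?thesis by simp
qed

lemma edge_int_lower:
  fixes k :: real assumes k: "k > 0"
  shows "\<exists>c>0. \<forall>a b \<psi>. (\<forall>x\<in>{0..pi}. \<psi> x = (a * sinh (k*(pi-x)) + b * sinh (k*x)) / sinh (k*pi))
      \<longrightarrow> c * a^2 \<le> integral {0..pi} (\<lambda>x. (\<psi> x)^2)"
proof -
  define s where "s = sinh (k*pi)"
  define C where "C = cosh (k*pi)"
  define P where "P = s * C / (2*k) - pi/2"
  define Q where "Q = pi * C / 2 - s / (2*k)"
  have s0: "s > 0" using k by (simp add: s_def)
  have sg: "s > k * pi" using sinh_gt_self[of "k*pi"] k by (simp add: s_def)
  have C1: "C > 1" using cosh_gt_1[of "k*pi"] k by (simp add: C_def)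
  have PQ1: "P - Q = (1 + C) * (s/(2*k) - pi/2)" using k by (simp add: P_def Q_def field_simps)
  have PQ2: "P + Q = (C - 1) * (s/(2*k) + pi/2)" using k by (simp add: P_def Q_def field_simps)
  have "s/(2*k) - pi/2 > 0" using sg k by (simp add: field_simps)
  hence p1: "P - Q > 0" using C1 PQ1 by simp
  have "s/(2*k) + pi/2 > 0" using s0 k by (simp add: field_simps pi_gt_zero add_pos_pos)
  hence p2: "P + Q > 0" using C1 PQ2 by simp
  have pabs: "P - \<bar>Q\<bar> > 0" using p1 p2 by linarith
  show ?thesis
  proof (intro exI[of _ "(P - \<bar>Q\<bar>) / s^2"] conjI allI impI)
    show "(P - \<bar>Q\<bar>) / s^2 > 0" using pabs s0 by simp
    fix a b and \<psi> :: "real \<Rightarrow> real"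
    assume h: "\<forall>x\<in>{0..pi}. \<psi> x = (a * sinh (k*(pi-x)) + b * sinh (k*x)) / sinh (k*pi)"
    have eq: "(\<psi> x)^2 = (a^2/s^2) * (sinh (k*(pi-x)))^2 + (b^2/s^2) * (sinh (k*x))^2
        + (2*a*b/s^2) * (sinh (k*(pi-x)) * sinh (k*x))" if "x \<in> {0..pi}" for x
      using s0 unfolding h[rule_format, OF that] s_def[symmetric] by (simp add: power2_eq_square field_simps)
    have "((\<lambda>x. (a^2/s^2) * (sinh (k*(pi-x)))^2 + (b^2/s^2) * (sinh (k*x))^2
        + (2*a*b/s^2) * (sinh (k*(pi-x)) * sinh (k*x))) has_integral
        ((a^2/s^2) * P + (b^2/s^2) * P + (2*a*b/s^2) * Q)) {0..pi}"
      unfolding P_def Q_def s_def C_def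
      by (intro has_integral_add has_integral_mult_right int_S1sq int_S2sq int_S12 k)
    hence "((\<lambda>x. (\<psi> x)^2) has_integral ((a^2/s^2) * P + (b^2/s^2) * P + (2*a*b/s^2) * Q)) {0..pi}"
      by (rule has_integral_spike_finite[where S="{}", rotated 2]) (use eq in auto)
    hence I: "integral {0..pi} (\<lambda>x. (\<psi> x)^2) = ((a^2 + b^2) * P + 2*a*b*Q) / s^2"
      by (simp add: integral_unique add_divide_distrib distrib_right)
    have "2*a*b*Q \<ge> - ((a^2 + b^2) * \<bar>Q\<bar>)"
    proof -
      have "0 \<le> (a-b)^2" "0 \<le> (a+b)^2" by simp_all
      hence "\<bar>2*a*b\<bar> \<le> a^2 + b^2" by (simp add: abs_le_iff power2_eq_square algebra_simps)
      hence "\<bar>2*a*b*Q\<bar> \<le> (a^2 + b^2) * \<bar>Q\<bar>" by (simp add: abs_mult mult_right_mono)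
      thus ?thesis by linarith
    qed
    hence "(a^2 + b^2) * P + 2*a*b*Q \<ge> (a^2 + b^2) * (P - \<bar>Q\<bar>)" by (simp add: algebra_simps)
    moreover have "(a^2 + b^2) * (P - \<bar>Q\<bar>) \<ge> a^2 * (P - \<bar>Q\<bar>)" using pabs by (simp add: mult_right_mono)
    ultimately have "a^2 * (P - \<bar>Q\<bar>) \<le> (a^2 + b^2) * P + 2*a*b*Q" by linarith
    hence "a^2 * (P - \<bar>Q\<bar>) / s^2 \<le> ((a^2 + b^2) * P + 2*a*b*Q) / s^2"
      using s0 by (simp add: divide_right_mono)
    thus "(P - \<bar>Q\<bar>) / s^2 * a^2 \<le> integral {0..pi} (\<lambda>x. (\<psi> x)^2)" unfolding I by (simp add: mult.commute)
  qed
qed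


lemma summable_edge_tendsto:
  fixes I :: "int \<times> bool \<Rightarrow> real"
  assumes s: "I summable_on UNIV" and nn: "\<And>e. I e \<ge> 0"
  shows "(\<lambda>n. I (int n, b)) \<longlonglongrightarrow> 0" "(\<lambda>n. I (- int n, b)) \<longlonglongrightarrow> 0"
proof -
  have "I summable_on range (\<lambda>n. (int n, b))" by (rule summable_on_subset_banach[OF s]) auto
  hence "(I \<circ> (\<lambda>n. (int n, b))) summable_on UNIV"
    by (subst summable_on_reindex[symmetric]) (auto simp: inj_on_def)
  hence "summable (\<lambda>n. I (int n, b))"
    using summable_on_UNIV_nonneg_real_iff[of "\<lambda>n. I (int n, b)"] nn by (simp add: o_def)
  thus "(\<lambda>n. I (int n, b)) \<longlonglongrightarrow> 0" by (rule summable_LIMSEQ_zero)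
  have "I summable_on range (\<lambda>n. (- int n, b))" by (rule summable_on_subset_banach[OF s]) auto
  hence "(I \<circ> (\<lambda>n. (- int n, b))) summable_on UNIV"
    by (subst summable_on_reindex[symmetric]) (auto simp: inj_on_def)
  hence "summable (\<lambda>n. I (- int n, b))"
    using summable_on_UNIV_nonneg_real_iff[of "\<lambda>n. I (- int n, b)"] nn by (simp add: o_def)
  thus "(\<lambda>n. I (- int n, b)) \<longlonglongrightarrow> 0" by (rule summable_LIMSEQ_zero)
qed

lemma rec_zero_int:
  fixes u :: "int \<Rightarrow> real"
  assumes D: "D > 1" and r: "\<forall>j. u (j+1) + u (j-1) = 2*D*u j"
    and t1: "(\<lambda>n. u (int n)) \<longlonglongrightarrow> 0" and t2: "(\<lambda>n. u (- int n)) \<longlonglongrightarrow> 0"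
  shows "u j = 0"
proof (rule ccontr)
  assume "u j \<noteq> 0"
  define M where "M = \<bar>u j\<bar>"
  have M0: "M > 0" using \<open>u j \<noteq> 0\<close> by (simp add: M_def)
  have "\<forall>\<^sub>F n in sequentially. \<bar>u (int n)\<bar> < M" using t1 M0 by (simp add: tendsto_iff dist_real_def)
  moreover have "\<forall>\<^sub>F n in sequentially. \<bar>u (- int n)\<bar> < M" using t2 M0 by (simp add: tendsto_iff dist_real_def)
  ultimately have "\<forall>\<^sub>F n in sequentially. \<bar>u (int n)\<bar> < M \<and> \<bar>u (- int n)\<bar> < M" by (rule eventually_conj)
  then obtain N where N: "\<And>n. n \<ge> N \<Longrightarrow> \<bar>u (int n)\<bar> < M \<and> \<bar>u (- int n)\<bar> < M"
    by (auto simp: eventually_sequentially)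
  define S where "S = {- int N..int N}"
  have out: "\<bar>u i\<bar> < M" if "i \<notin> S" for i
  proof (cases "i > 0")
    case True
    hence "i = int (nat i)" "nat i \<ge> N" using that by (auto simp: S_def)
    thus ?thesis using N by metis
  next
    case False
    hence "i = - int (nat (-i))" "nat (-i) \<ge> N" using that by (auto simp: S_def)
    thus ?thesis using N by metis
  qed
  have jS: "j \<in> S" using out[of j] M_def by force
  define m where "m = Max ((\<lambda>i. \<bar>u i\<bar>) ` S)"
  have fS: "finite S" by (simp add: S_def)
  have "m \<in> (\<lambda>i. \<bar>u i\<bar>) ` S" unfolding m_def using fS jS by (intro Max_in) auto
  then obtain js where js: "js \<in> S" "\<bar>u js\<bar> = m" by auto
  have Mm: "M \<le> m" unfolding m_def M_def using fS jS by (auto intro: Max_ge)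
  have le: "\<bar>u i\<bar> \<le> m" for i
  proof (cases "i \<in> S")
    case True thus ?thesis unfolding m_def using fS by (auto intro: Max_ge)
  next
    case False thus ?thesis using out[of i] Mm by simp
  qed
  have "2*D*m = \<bar>u (js+1) + u (js-1)\<bar>" using r js(2) D by (simp add: abs_mult)
  also have "\<dots> \<le> 2*m" using le[of "js+1"] le[of "js-1"] by linarith
  finally have "(D - 1) * m \<le> 0" by (simp add: algebra_simps)
  thus False using D Mm M0 by (simp add: mult_le_0_iff)
qed

lemma rec_zero_nat:
  fixes v :: "nat \<Rightarrow> real"
  assumes D: "D > 1" and D': "D' > 1" and r: "\<forall>n. v (n+2) + v n = 2*D* v (n+1)"
    and v1: "v 1 = D' * v 0" and t: "v \<longlonglongrightarrow> 0"
  shows "v n = 0"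
proof (rule ccontr)
  assume "v n \<noteq> 0"
  define M where "M = \<bar>v n\<bar>"
  have M0: "M > 0" using \<open>v n \<noteq> 0\<close> by (simp add: M_def)
  have "\<forall>\<^sub>F i in sequentially. \<bar>v i\<bar> < M" using t M0 by (simp add: tendsto_iff dist_real_def)
  then obtain N where N: "\<And>i. i \<ge> N \<Longrightarrow> \<bar>v i\<bar> < M" by (auto simp: eventually_sequentially)
  define S where "S = {..N}"
  have out: "\<bar>v i\<bar> < M" if "i \<notin> S" for i using N that by (simp add: S_def)
  have nS: "n \<in> S" using out[of n] M_def by force
  define m where "m = Max ((\<lambda>i. \<bar>v i\<bar>) ` S)"
  have fS: "finite S" by (simp add: S_def)
  have "m \<in> (\<lambda>i. \<bar>v i\<bar>) ` S" unfolding m_def using fS nS by (intro Max_in) auto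
  then obtain js where js: "js \<in> S" "\<bar>v js\<bar> = m" by auto
  have Mm: "M \<le> m" unfolding m_def M_def using fS nS by (auto intro: Max_ge)
  have le: "\<bar>v i\<bar> \<le> m" for i
  proof (cases "i \<in> S")
    case True thus ?thesis unfolding m_def using fS by (auto intro: Max_ge)
  next
    case False thus ?thesis using out[of i] Mm by simp
  qed
  show False
  proof (cases js)
    case 0
    have "D' * m = \<bar>v 1\<bar>" using v1 js(2) 0 D' by (simp add: abs_mult)
    also have "\<dots> \<le> m" by (rule le)
    finally have "(D' - 1) * m \<le> 0" by (simp add: algebra_simps)
    thus False using D' Mm M0 by (simp add: mult_le_0_iff)
  next
    case (Suc p)
    have "2*D*m = \<bar>v (p+2) + v p\<bar>" using r[rule_format, of p] js(2) Suc D by (simp add: abs_mult)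
    also have "\<dots> \<le> 2*m" using le[of "p+2"] le[of p] by linarith
    finally have "(D - 1) * m \<le> 0" by (simp add: algebra_simps)
    thus False using D Mm M0 by (simp add: mult_le_0_iff)
  qed
qed


lemma chain_len_nz: "j \<noteq> 0 \<Longrightarrow> chain_len \<theta> (j, b) = pi"
  by (simp add: chain_len_def)

lemma chain_len_0: "chain_len 0 e = pi"
  by (simp add: chain_len_def)

lemma chain_len_pos: "0 \<le> \<theta> \<Longrightarrow> \<theta> < pi \<Longrightarrow> chain_len \<theta> e > 0"
  by (auto simp: chain_len_def)

lemma graph_homog:
  fixes l :: "edge \<Rightarrow> real"
  assumes H: "H_rel l \<alpha> \<psi> (\<lambda>e x. - (k^2) * \<psi> e x)" and k: "k > 0" and lp: "\<And>e. l e > 0"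
  shows "L2_graph l \<psi>"
   and "\<And>e x. x \<in> {0..l e} \<Longrightarrow> \<psi> e x = (\<psi> e 0 * sinh (k*(l e - x)) + \<psi> e (l e) * sinh (k*x)) / sinh (k * l e)"
   and "\<And>j. \<psi> (j-1,True) (l (j-1,True)) = \<psi> (j,True) 0"
   and "\<And>j. \<psi> (j-1,False) (l (j-1,False)) = \<psi> (j,True) 0"
   and "\<And>j. \<psi> (j,False) 0 = \<psi> (j,True) 0"
   and "\<And>j. k * (\<psi> (j,True) (l (j,True)) - cosh (k * l (j,True)) * \<psi> (j,True) 0) / sinh (k * l (j,True))
           + k * (\<psi> (j,False) (l (j,False)) - cosh (k * l (j,False)) * \<psi> (j,False) 0) / sinh (k * l (j,False))
           - k * (cosh (k * l (j-1,True)) * \<psi> (j-1,True) (l (j-1,True)) - \<psi> (j-1,True) 0) / sinh (k * l (j-1,True))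
           - k * (cosh (k * l (j-1,False)) * \<psi> (j-1,False) (l (j-1,False)) - \<psi> (j-1,False) 0) / sinh (k * l (j-1,False))
           = \<alpha> * \<psi> (j,True) 0"
proof -
  show "L2_graph l \<psi>" using H by (simp add: H_rel_def)
  obtain \<psi>' \<psi>'' where W: "\<And>e. edge_W22 (l e) (\<psi> e) (\<psi>' e) (\<psi>'' e)"
    and ae: "ae_eq_graph l (\<lambda>e x. - (k^2) * \<psi> e x) (\<lambda>e x. - \<psi>'' e x)"
    and dc: "delta_cond l \<alpha> \<psi> \<psi>'"
    using H unfolding H_rel_def by blast
  have hs: "\<And>e. (\<forall>x\<in>{0..l e}. \<psi> e x = (\<psi> e 0 * sinh (k*(l e-x)) + \<psi> e (l e) * sinh (k*x)) / sinh (k*l e))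
      \<and> \<psi>' e 0 = k * (\<psi> e (l e) - cosh (k*l e) * \<psi> e 0) / sinh (k*l e)
      \<and> \<psi>' e (l e) = k * (cosh (k*l e) * \<psi> e (l e) - \<psi> e 0) / sinh (k*l e)"
  proof -
    fix e
    have ng: "negligible {x \<in> {0..l e}. - (k^2) * \<psi> e x \<noteq> - \<psi>'' e x}"
      using ae unfolding ae_eq_graph_def by blast
    from homog_solution[OF lp[of e] k W[of e] ng] show "?thesis e" by blast
  qed
  show "\<And>e x. x \<in> {0..l e} \<Longrightarrow> \<psi> e x = (\<psi> e 0 * sinh (k*(l e - x)) + \<psi> e (l e) * sinh (k*x)) / sinh (k * l e)"
    using hs by blast
  fix j
  show "\<psi> (j-1,True) (l (j-1,True)) = \<psi> (j,True) 0" using dc unfolding delta_cond_def by blast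
  show "\<psi> (j-1,False) (l (j-1,False)) = \<psi> (j,True) 0" using dc unfolding delta_cond_def by blast
  show "\<psi> (j,False) 0 = \<psi> (j,True) 0" using dc unfolding delta_cond_def by blast
  have d: "\<psi>' (j, True) 0 + \<psi>' (j, False) 0 - \<psi>' (j - 1, True) (l (j - 1, True))
        - \<psi>' (j - 1, False) (l (j - 1, False)) = \<alpha> * \<psi> (j, True) 0"
    using dc unfolding delta_cond_def by blast
  show "k * (\<psi> (j,True) (l (j,True)) - cosh (k * l (j,True)) * \<psi> (j,True) 0) / sinh (k * l (j,True))
           + k * (\<psi> (j,False) (l (j,False)) - cosh (k * l (j,False)) * \<psi> (j,False) 0) / sinh (k * l (j,False))
           - k * (cosh (k * l (j-1,True)) * \<psi> (j-1,True) (l (j-1,True)) - \<psi> (j-1,True) 0) / sinh (k * l (j-1,True))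
           - k * (cosh (k * l (j-1,False)) * \<psi> (j-1,False) (l (j-1,False)) - \<psi> (j-1,False) 0) / sinh (k * l (j-1,False))
           = \<alpha> * \<psi> (j,True) 0"
    using d hs[of "(j,True)"] hs[of "(j,False)"] hs[of "(j-1,True)"] hs[of "(j-1,False)"] by simp
qed

lemma sq_tendsto_zero:
  fixes a :: "nat \<Rightarrow> real"
  assumes c: "c > 0" and le: "\<And>n. c * (a n)^2 \<le> I n" and t: "I \<longlonglongrightarrow> 0"
  shows "a \<longlonglongrightarrow> 0"
proof -
  have "(\<lambda>n. (a n)^2) \<longlonglongrightarrow> 0"
  proof (rule tendsto_sandwich[of "\<lambda>n. 0" _ _ "\<lambda>n. I n / c"])
    show "\<forall>\<^sub>F n in sequentially. 0 \<le> (a n)^2" by simp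
    show "\<forall>\<^sub>F n in sequentially. (a n)^2 \<le> I n / c" using le c by (simp add: field_simps mult.commute)
    show "(\<lambda>n. I n / c) \<longlonglongrightarrow> 0" using tendsto_divide[OF t tendsto_const, of c] c by simp
  qed simp
  hence "(\<lambda>n. sqrt ((a n)^2)) \<longlonglongrightarrow> sqrt 0" by (rule tendsto_real_sqrt)
  hence "(\<lambda>n. \<bar>a n\<bar>) \<longlonglongrightarrow> 0" by simp
  thus ?thesis by (rule tendsto_rabs_zero_cancel)
qed

lemma L2_edge_props:
  assumes "L2_graph l \<psi>"
  shows "(\<lambda>e. integral {0..l e} (\<lambda>x. (\<psi> e x)^2)) summable_on UNIV"
    "\<And>e. integral {0..l e} (\<lambda>x. (\<psi> e x)^2) \<ge> 0"
  using assms unfolding L2_graph_def by (auto intro!: integral_nonneg)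


lemma straight_inj:
  fixes \<alpha> k :: real
  assumes k: "k > 0" and D1: "cosh (k*pi) + \<alpha> * sinh (k*pi) / (4*k) > 1"
    and H: "H_rel (chain_len 0) \<alpha> \<psi> (\<lambda>e x. - (k^2) * \<psi> e x)"
  shows "ae_eq_graph (chain_len 0) \<psi> (\<lambda>e x. 0)"
proof -
  define l where "l = chain_len 0"
  have lpi: "l e = pi" for e by (simp add: l_def chain_len_0)
  have lp: "l e > 0" for e by (simp add: lpi)
  note GH = graph_homog[OF H[folded l_def] k lp]
  define u where "u j = \<psi> (j,True) 0" for j
  define s where "s = sinh (k*pi)"
  define c where "c = cosh (k*pi)"
  define D where "D = c + \<alpha> * s / (4*k)"
  have s0: "s > 0" using k by (simp add: s_def)
  have D1': "D > 1" using D1 by (simp add: D_def c_def s_def)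
  have e0: "\<psi> (j,b) 0 = u j" for j b using GH(5)[of j] by (cases b) (simp_all add: u_def)
  have e1: "\<psi> (j,b) pi = u (j+1)" for j b
    using GH(3)[of "j+1"] GH(4)[of "j+1"] by (cases b) (simp_all add: u_def lpi)
  have form: "\<psi> (j,b) x = (u j * sinh (k*(pi - x)) + u (j+1) * sinh (k*x)) / s" if "x \<in> {0..pi}" for j b x
    using GH(2)[of x "(j,b)"] that by (simp add: lpi e0 e1 s_def)
  have rec: "u (j+1) + u (j-1) = 2*D*u j" for j
  proof -
    have h0: "k * (u (j+1) - c * u j) / s + k * (u (j+1) - c * u j) / s
        - k * (c * u j - u (j-1)) / s - k * (c * u j - u (j-1)) / s = \<alpha> * u j"
      using GH(6)[of j] by (simp add: lpi e0 e1 c_def s_def u_def[symmetric])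
    have "k * (u (j+1) - c * u j) / s + k * (u (j+1) - c * u j) / s
        - k * (c * u j - u (j-1)) / s - k * (c * u j - u (j-1)) / s
        = (2*k*(u (j+1) + u (j-1) - 2*c*u j)) / s"
      by (simp add: add_divide_distrib[symmetric] diff_divide_distrib[symmetric] algebra_simps)
    with h0 have "2*k*(u (j+1) + u (j-1) - 2*c*u j) = \<alpha> * u j * s" using s0 by (simp add: field_simps)
    hence "u (j+1) + u (j-1) = 2*c*u j + \<alpha> * u j * s / (2*k)" using k by (simp add: field_simps)
    thus ?thesis unfolding D_def by (simp add: algebra_simps)
  qed
  obtain cc where cc: "cc > 0" and low: "\<And>a b f. (\<forall>x\<in>{0..pi}. f x = (a * sinh (k*(pi-x)) + b * sinh (k*x)) / sinh (k*pi))
      \<Longrightarrow> cc * a^2 \<le> integral {0..pi} (\<lambda>x. (f x)^2)"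
    using edge_int_lower[OF k] by blast
  define I where "I = (\<lambda>e. integral {0..l e} (\<lambda>x. (\<psi> e x)^2))"
  have Is: "I summable_on UNIV" and I0: "\<And>e. I e \<ge> 0"
    using L2_edge_props[OF GH(1)] by (simp_all add: I_def)
  have lowj: "cc * (u j)^2 \<le> I (j,True)" for j
    unfolding I_def lpi by (rule low[where b="u (j+1)"]) (use form in \<open>simp add: s_def\<close>)
  have t1: "(\<lambda>n. u (int n)) \<longlonglongrightarrow> 0"
    by (rule sq_tendsto_zero[OF cc lowj summable_edge_tendsto(1)[OF Is I0]])
  have t2: "(\<lambda>n. u (- int n)) \<longlonglongrightarrow> 0"
    by (rule sq_tendsto_zero[OF cc lowj summable_edge_tendsto(2)[OF Is I0]])
  have uz: "u j = 0" for j by (rule rec_zero_int[OF D1' _ t1 t2]) (use rec in auto)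
  show ?thesis unfolding ae_eq_graph_def l_def[symmetric]
  proof
    fix e :: edge
    obtain j b where e: "e = (j,b)" by (cases e)
    have "{x \<in> {0..l e}. \<psi> e x \<noteq> 0} = {}" using form uz by (auto simp: e lpi)
    thus "negligible {x \<in> {0..l e}. \<psi> e x \<noteq> 0}" by (simp only: negligible_empty)
  qed
qed


lemma eq_helper: "X - P - Q = R \<Longrightarrow> X = R + P + (Q::real)" by simp

lemma part1:
  fixes \<alpha> \<theta> E :: real
  assumes th: "0 < \<theta>" "\<theta> < pi" and a: "\<alpha> \<ge> 0" and ev: "even_eigenvalue \<theta> \<alpha> E"
  shows "E \<ge> 0"
proof (rule ccontr)
  assume "\<not> E \<ge> 0"
  hence En: "E < 0" by simp
  define k where "k = sqrt (- E)"
  have k: "k > 0" using En by (simp add: k_def)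
  have Ek: "E = - (k^2)" using En by (simp add: k_def)
  define l where "l = chain_len \<theta>"
  obtain \<psi> where H: "H_rel l \<alpha> \<psi> (\<lambda>e x. - (k^2) * \<psi> e x)" and evn: "even_fn l \<psi>"
    and nz: "\<not> ae_eq_graph l \<psi> (\<lambda>e x. 0)"
    using ev unfolding even_eigenvalue_def l_def[symmetric] Ek by blast
  have lp: "l e > 0" for e unfolding l_def by (rule chain_len_pos) (use th in auto)
  have lpi: "l (j,b) = pi" if "j \<noteq> 0" for j b using that by (simp add: l_def chain_len_nz)
  note GH = graph_homog[OF H k lp]
  define u where "u j = \<psi> (j,True) 0" for j
  define s where "s = sinh (k*pi)"
  define c where "c = cosh (k*pi)"
  have s0: "s > 0" using k by (simp add: s_def)
  have c1: "c > 1" using cosh_gt_1[of "k*pi"] k by (simp add: c_def)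
  have e0: "\<psi> (j,b) 0 = u j" for j b using GH(5)[of j] by (cases b) (simp_all add: u_def)
  have e1: "\<psi> (j,b) (l (j,b)) = u (j+1)" for j b
    using GH(3)[of "j+1"] GH(4)[of "j+1"] by (cases b) (simp_all add: u_def)
  have form: "\<psi> (j,b) x = (u j * sinh (k*(l (j,b) - x)) + u (j+1) * sinh (k*x)) / sinh (k * l (j,b))"
    if "x \<in> {0..l (j,b)}" for j b x
    using GH(2)[of x "(j,b)"] that by (simp add: e0 e1)
  have u01: "u 1 = u 0"
  proof -
    have "\<psi> (- 0, True) (l (0, True) - 0) = \<psi> (0, True) 0"
      using evn lp[of "(0,True)"] unfolding even_fn_def by (meson atLeastAtMost_iff less_imp_le order_refl)
    thus ?thesis using e1[of 0 True] by (simp add: u_def)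
  qed
  define D where "D = c + \<alpha> * s / (4*k)"
  have D1: "D > 1" using c1 a s0 k unfolding D_def by (smt (verit) divide_nonneg_pos mult_nonneg_nonneg)
  have rec: "u (j+1) + u (j-1) = 2*D*u j" if j2: "j \<ge> 2" for j
  proof -
    have nz1: "j \<noteq> 0" "j - 1 \<noteq> 0" using j2 by auto
    have h0: "k * (u (j+1) - c * u j) / s + k * (u (j+1) - c * u j) / s
        - k * (c * u j - u (j-1)) / s - k * (c * u j - u (j-1)) / s = \<alpha> * u j"
      using GH(6)[of j] e1[of j] e1[of "j-1"] by (simp add: lpi[OF nz1(1)] lpi[OF nz1(2)] e0 c_def s_def u_def[symmetric])
    have "k * (u (j+1) - c * u j) / s + k * (u (j+1) - c * u j) / s
        - k * (c * u j - u (j-1)) / s - k * (c * u j - u (j-1)) / s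
        = (2*k*(u (j+1) + u (j-1) - 2*c*u j)) / s"
      by (simp add: add_divide_distrib[symmetric] diff_divide_distrib[symmetric] algebra_simps)
    with h0 have "2*k*(u (j+1) + u (j-1) - 2*c*u j) = \<alpha> * u j * s" using s0 by (simp add: field_simps)
    hence "u (j+1) + u (j-1) = 2*c*u j + \<alpha> * u j * s / (2*k)" using k by (simp add: field_simps)
    thus ?thesis unfolding D_def by (simp add: algebra_simps)
  qed
  define CT where "CT = cosh (k * l (0,True))"
  define ST where "ST = sinh (k * l (0,True))"
  define CF where "CF = cosh (k * l (0,False))"
  define SF where "SF = sinh (k * l (0,False))"
  have ST0: "ST > 0" using k lp[of "(0,True)"] by (simp add: ST_def)
  have SF0: "SF > 0" using k lp[of "(0,False)"] by (simp add: SF_def)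
  have CT1: "CT \<ge> 1" by (simp add: CT_def cosh_real_ge_1)
  have CF1: "CF \<ge> 1" by (simp add: CF_def cosh_real_ge_1)
  define \<beta> where "\<beta> = \<alpha> + k * (CT - 1) / ST + k * (CF - 1) / SF"
  have \<beta>0: "\<beta> \<ge> 0" unfolding \<beta>_def using a k ST0 SF0 CT1 CF1 by (simp add: add_nonneg_nonneg)
  define D' where "D' = c + \<beta> * s / (2*k)"
  have D'1: "D' > 1" using c1 \<beta>0 s0 k unfolding D'_def by (smt (verit) divide_nonneg_pos mult_nonneg_nonneg)
  have r1: "u 2 = D' * u 1"
  proof -
    have h0: "k * (u 2 - c * u 1) / s + k * (u 2 - c * u 1) / s
        - k * (CT * u 1 - u 0) / ST - k * (CF * u 1 - u 0) / SF = \<alpha> * u 1"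
      using GH(6)[of 1] e1[of 1] e1[of 0] by (simp add: lpi e0 c_def s_def CT_def ST_def CF_def SF_def u_def[symmetric])
    have h0': "k * (u 2 - c * u 1) / s + k * (u 2 - c * u 1) / s
        - k * (CT * u 1 - u 1) / ST - k * (CF * u 1 - u 1) / SF = \<alpha> * u 1"
      using h0 u01 by simp
    have a1: "k * (CT * u 1 - u 1) / ST = k * (CT - 1) / ST * u 1" using ST0 by (simp add: field_simps)
    have a2: "k * (CF * u 1 - u 1) / SF = k * (CF - 1) / SF * u 1" using SF0 by (simp add: field_simps)
    have a3: "k * (u 2 - c * u 1) / s + k * (u 2 - c * u 1) / s = 2*k*(u 2 - c * u 1) / s"
      by (simp add: add_divide_distrib[symmetric])
    have a4: "\<beta> * u 1 = \<alpha> * u 1 + k * (CT - 1) / ST * u 1 + k * (CF - 1) / SF * u 1"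
      unfolding \<beta>_def by (simp add: distrib_right)
    have h1: "2*k*(u 2 - c * u 1) / s - k * (CT - 1) / ST * u 1 - k * (CF - 1) / SF * u 1 = \<alpha> * u 1"
      using h0' unfolding a1 a2 a3 .
    have "2*k*(u 2 - c * u 1) / s = \<beta> * u 1" unfolding a4 using h1 by (rule eq_helper)
    hence "2*k*(u 2 - c * u 1) = \<beta> * u 1 * s" using s0 by (simp add: field_simps)
    hence "u 2 = c * u 1 + \<beta> * u 1 * s / (2*k)" using k by (simp add: field_simps)
    thus ?thesis unfolding D'_def by (simp add: algebra_simps)
  qed
  obtain cc where cc: "cc > 0" and low: "\<And>a b f. (\<forall>x\<in>{0..pi}. f x = (a * sinh (k*(pi-x)) + b * sinh (k*x)) / sinh (k*pi))
      \<Longrightarrow> cc * a^2 \<le> integral {0..pi} (\<lambda>x. (f x)^2)"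
    using edge_int_lower[OF k] by blast
  define I where "I = (\<lambda>e. integral {0..l e} (\<lambda>x. (\<psi> e x)^2))"
  have Is: "I summable_on UNIV" and I0: "\<And>e. I e \<ge> 0"
    using L2_edge_props[OF GH(1)] by (simp_all add: I_def)
  define v where "v n = u (int n + 1)" for n
  have lowj: "cc * (v n)^2 \<le> I (int (Suc n), True)" for n
  proof -
    have nz: "int (Suc n) \<noteq> 0" by simp
    show ?thesis unfolding I_def v_def lpi[OF nz]
      by (rule low[where b="u (int n + 2)"]) (use form[where j="int (Suc n)" and b=True] lpi[OF nz] in \<open>simp add: s_def algebra_simps\<close>)
  qed
  have "(\<lambda>n. I (int (Suc n), True)) \<longlonglongrightarrow> 0"
    using LIMSEQ_Suc[OF summable_edge_tendsto(1)[OF Is I0, of True]] by simp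
  hence tv: "v \<longlonglongrightarrow> 0" by (rule sq_tendsto_zero[OF cc lowj])
  have vz: "v n = 0" for n
  proof (rule rec_zero_nat[OF D1 D'1 _ _ tv])
    show "\<forall>n. v (n+2) + v n = 2*D * v (n+1)"
    proof
      fix n
      have "u (int n + 2 + 1) + u (int n + 2 - 1) = 2*D*u (int n + 2)" by (rule rec) simp
      thus "v (n+2) + v n = 2*D * v (n+1)" by (simp add: v_def algebra_simps)
    qed
    show "v 1 = D' * v 0" using r1 by (simp add: v_def)
  qed
  have upos: "u j = 0" if "j \<ge> 1" for j
    using vz[of "nat (j - 1)"] that by (simp add: v_def)
  have uz: "u j = 0" for j
  proof (cases "j \<ge> 1")
    case True thus ?thesis by (rule upos)
  next
    case False
    show ?thesis
    proof (cases "j = 0")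
      case True thus ?thesis using u01 upos[of 1] by simp
    next
      case False
      with \<open>\<not> j \<ge> 1\<close> have jn: "j < 0" by simp
      have nz: "- j \<noteq> 0" using jn by simp
      have "\<psi> (- (- j), True) (l (- j, True) - l (- j, True)) = \<psi> (- j, True) (l (- j, True))"
        using evn lp[of "(-j,True)"] unfolding even_fn_def by (meson atLeastAtMost_iff less_imp_le order_refl)
      hence "u j = u (- j + 1)" using e1[of "-j" True] by (simp add: u_def)
      thus ?thesis using upos[of "-j+1"] jn by simp
    qed
  qed
  have "ae_eq_graph l \<psi> (\<lambda>e x. 0)" unfolding ae_eq_graph_def
  proof
    fix e :: edge
    obtain j b where e: "e = (j,b)" by (cases e)
    have "{x \<in> {0..l e}. \<psi> e x \<noteq> 0} = {}" using form uz by (auto simp: e)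
    thus "negligible {x \<in> {0..l e}. \<psi> e x \<noteq> 0}" by (simp only: negligible_empty)
  qed
  with nz show False by simp
qed


lemma L2_from_bound:
  fixes l :: "edge \<Rightarrow> real" and \<psi> :: gfun
  assumes c: "\<And>e. continuous_on {0..l e} (\<psi> e)"
    and b: "\<And>e. integral {0..l e} (\<lambda>x. (\<psi> e x)^2) \<le> B e" and s: "B summable_on UNIV"
  shows "L2_graph l \<psi>"
  unfolding L2_graph_def
proof (intro conjI allI)
  fix e
  show "\<psi> e measurable_on {0..l e}"
    using c[of e] by (simp add: measurable_on_iff_borel_measurable continuous_imp_measurable_on_sets_lebesgue)
  show "(\<lambda>x. (\<psi> e x)^2) integrable_on {0..l e}"
    by (intro integrable_continuous_real continuous_intros c)
next
  show "(\<lambda>e. integral {0..l e} (\<lambda>x. (\<psi> e x)^2)) summable_on UNIV"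
  proof (rule summable_on_comparison_test[OF s])
    fix e
    show "integral {0..l e} (\<lambda>x. (\<psi> e x)^2) \<le> B e" by (rule b)
    show "0 \<le> integral {0..l e} (\<lambda>x. (\<psi> e x)^2)"
      by (intro integral_nonneg integrable_continuous_real continuous_intros c) simp
  qed
qed

lemma summable_int_edge:
  fixes a :: "int \<Rightarrow> real"
  assumes s: "a summable_on UNIV"
  shows "(\<lambda>e::edge. a (fst e)) summable_on UNIV"
proof -
  have r: "(\<lambda>e::edge. a (fst e)) summable_on range (\<lambda>j. (j, b))" for b
    by (subst summable_on_reindex) (auto simp: inj_on_def o_def s)
  have "(\<lambda>e::edge. a (fst e)) summable_on (range (\<lambda>j. (j, True)) \<union> range (\<lambda>j. (j, False)))"
    by (rule summable_on_Un_disjoint[OF r r]) auto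
  moreover have "range (\<lambda>j. (j, True)) \<union> range (\<lambda>j. (j, False)) = (UNIV :: edge set)"
    by auto
  ultimately show ?thesis by simp
qed

lemma summable_int_shift:
  fixes a :: "int \<Rightarrow> real"
  assumes s: "a summable_on UNIV"
  shows "(\<lambda>j. a (j + c)) summable_on UNIV"
proof -
  have "bij_betw (\<lambda>j. j + c) UNIV UNIV"
    by (rule bij_betwI[of _ _ _ "\<lambda>j. j - c"]) auto
  thus ?thesis using summable_on_reindex_bij_betw[of "\<lambda>j. j + c" UNIV UNIV a] s by simp
qed

lemma summable_edge_part:
  fixes a :: "edge \<Rightarrow> real"
  assumes s: "a summable_on UNIV"
  shows "(\<lambda>j. a (j, b)) summable_on UNIV"
proof -
  have "a summable_on range (\<lambda>j. (j, b))" by (rule summable_on_subset_banach[OF s]) auto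
  thus ?thesis by (subst (asm) summable_on_reindex) (auto simp: inj_on_def o_def)
qed

lemma summable_geom_int:
  fixes r :: real
  assumes r0: "0 \<le> r" and r1: "r < 1"
  shows "(\<lambda>j::int. r ^ nat (if j \<ge> 1 then j - 1 else - j)) summable_on UNIV"
proof -
  define f where "f = (\<lambda>j::int. r ^ nat (if j \<ge> 1 then j - 1 else - j))"
  have g: "(\<lambda>n::nat. r ^ n) summable_on UNIV"
    using summable_on_UNIV_nonneg_real_iff[of "\<lambda>n. r^n"] r0 r1 summable_geometric[of r] by simp
  have A: "f summable_on range (\<lambda>n. int n + 1)"
    by (subst summable_on_reindex) (auto simp: inj_on_def o_def f_def g)
  have B: "f summable_on range (\<lambda>n. - int n)"
    by (subst summable_on_reindex) (auto simp: inj_on_def o_def f_def g)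
  have "f summable_on (range (\<lambda>n. int n + 1) \<union> range (\<lambda>n. - int n))"
    by (rule summable_on_Un_disjoint[OF A B]) auto
  moreover have "range (\<lambda>n. int n + 1) \<union> range (\<lambda>n. - int n) = (UNIV :: int set)"
  proof -
    have "j \<in> range (\<lambda>n. int n + 1) \<union> range (\<lambda>n. - int n)" for j :: int
    proof (cases "j \<ge> 1")
      case True thus ?thesis by (auto intro!: image_eqI[of _ _ "nat (j - 1)"])
    next
      case False thus ?thesis by (auto intro!: image_eqI[of _ _ "nat (- j)"])
    qed
    thus ?thesis by auto
  qed
  ultimately show ?thesis by (simp add: f_def)
qed


lemma L2_cmult:
  assumes "L2_graph l \<psi>"
  shows "L2_graph l (\<lambda>e x. c * \<psi> e x)"
  unfolding L2_graph_def
proof (intro conjI allI)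
  fix e
  show "(\<lambda>x. c * \<psi> e x) measurable_on {0..l e}"
    using assms unfolding L2_graph_def by (intro measurable_on_cmul) blast
  have "(\<lambda>x. (\<psi> e x)^2) integrable_on {0..l e}" using assms unfolding L2_graph_def by blast
  from integrable_on_cmult_left[OF this, of "c^2"]
  show "(\<lambda>x. (c * \<psi> e x)^2) integrable_on {0..l e}" by (simp add: power_mult_distrib)
next
  have "(\<lambda>e. integral {0..l e} (\<lambda>x. (\<psi> e x)^2)) summable_on UNIV" using assms unfolding L2_graph_def by blast
  from summable_on_cmult_right[OF this, of "c^2"]
  show "(\<lambda>e. integral {0..l e} (\<lambda>x. (c * \<psi> e x)^2)) summable_on UNIV"
    by (simp add: power_mult_distrib)
qed

lemma harmonic_graph:
  fixes l :: "edge \<Rightarrow> real" and u :: "int \<Rightarrow> real" and k \<alpha> :: real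
  assumes k: "k > 0" and lp: "\<And>e. l e > 0"
    and \<psi>def: "\<psi> = (\<lambda>e x. (u (fst e) * sinh (k*(l e - x)) + u (fst e + 1) * sinh (k*x)) / sinh (k * l e))"
    and vs: "\<And>j. k * (u (j+1) - cosh (k * l (j,True)) * u j) / sinh (k * l (j,True))
           + k * (u (j+1) - cosh (k * l (j,False)) * u j) / sinh (k * l (j,False))
           - k * (cosh (k * l (j-1,True)) * u j - u (j-1)) / sinh (k * l (j-1,True))
           - k * (cosh (k * l (j-1,False)) * u j - u (j-1)) / sinh (k * l (j-1,False))
           = \<alpha> * u j"
    and L2: "L2_graph l \<psi>"
  shows "H_rel l \<alpha> \<psi> (\<lambda>e x. - (k^2) * \<psi> e x)"
  unfolding H_rel_def
proof (intro conjI L2 L2_cmult exI)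
  define \<psi>' where "\<psi>' = (\<lambda>e x. k * (u (fst e + 1) * cosh (k*x) - u (fst e) * cosh (k*(l e - x))) / sinh (k * l e))"
  define \<psi>'' where "\<psi>'' = (\<lambda>e x. k^2 * \<psi> e x)"
  show "\<forall>e. edge_W22 (l e) (\<psi> e) (\<psi>' e) (\<psi>'' e)"
  proof
    fix e
    show "edge_W22 (l e) (\<psi> e) (\<psi>' e) (\<psi>'' e)"
    proof (rule W22_smooth)
      fix x
      show "(\<psi> e has_real_derivative \<psi>' e x) (at x within {0..l e})"
        unfolding \<psi>def \<psi>'_def using k lp[of e]
        by (auto intro!: derivative_eq_intros simp: field_simps)
      show "(\<psi>' e has_real_derivative \<psi>'' e x) (at x within {0..l e})"
        unfolding \<psi>def \<psi>'_def \<psi>''_def using k lp[of e]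
        by (auto intro!: derivative_eq_intros simp: field_simps power2_eq_square)
    next
      show "continuous_on {0..l e} (\<psi>'' e)"
        unfolding \<psi>''_def \<psi>def using lp[of e] k by (intro continuous_intros) simp
    qed
  qed
  show "ae_eq_graph l (\<lambda>e x. - (k^2) * \<psi> e x) (\<lambda>e x. - \<psi>'' e x)"
    unfolding ae_eq_graph_def \<psi>''_def by simp
  have S: "sinh (k * l e) \<noteq> 0" for e using k lp[of e] by simp
  show "delta_cond l \<alpha> \<psi> \<psi>'"
    unfolding delta_cond_def
  proof (intro allI conjI)
    fix j :: int
    show "\<psi> (j - 1, True) (l (j - 1, True)) = \<psi> (j, True) 0" unfolding \<psi>def using S by simp
    show "\<psi> (j - 1, False) (l (j - 1, False)) = \<psi> (j, True) 0" unfolding \<psi>def using S by simp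
    show "\<psi> (j, False) 0 = \<psi> (j, True) 0" unfolding \<psi>def using S by simp
    have "\<psi>' (j, True) 0 + \<psi>' (j, False) 0 - \<psi>' (j - 1, True) (l (j - 1, True)) - \<psi>' (j - 1, False) (l (j - 1, False))
      = k * (u (j+1) - cosh (k * l (j,True)) * u j) / sinh (k * l (j,True))
           + k * (u (j+1) - cosh (k * l (j,False)) * u j) / sinh (k * l (j,False))
           - k * (cosh (k * l (j-1,True)) * u j - u (j-1)) / sinh (k * l (j-1,True))
           - k * (cosh (k * l (j-1,False)) * u j - u (j-1)) / sinh (k * l (j-1,False))"
      unfolding \<psi>'_def by (simp add: algebra_simps)
    also have "\<dots> = \<alpha> * u j" by (rule vs)
    also have "\<dots> = \<alpha> * \<psi> (j, True) 0" unfolding \<psi>def using S by simp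
    finally show "\<psi>' (j, True) 0 + \<psi>' (j, False) 0 - \<psi>' (j - 1, True) (l (j - 1, True))
        - \<psi>' (j - 1, False) (l (j - 1, False)) = \<alpha> * \<psi> (j, True) 0" .
  qed
qed

lemma integral_sq_le:
  fixes f :: "real \<Rightarrow> real"
  assumes L: "L \<ge> 0" and c: "continuous_on {0..L} f" and b: "\<And>x. x \<in> {0..L} \<Longrightarrow> (f x)^2 \<le> M"
  shows "integral {0..L} (\<lambda>x. (f x)^2) \<le> L * M"
proof -
  have "integral {0..L} (\<lambda>x. (f x)^2) \<le> integral {0..L} (\<lambda>x. M)"
    by (rule integral_le) (auto intro!: integrable_continuous_real continuous_intros c b)
  thus ?thesis using L by simp
qed

lemma harmonic_bound:
  fixes k L a b x :: real
  assumes k: "k > 0" and L: "L > 0" and x: "x \<in> {0..L}"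
  shows "\<bar>(a * sinh (k*(L - x)) + b * sinh (k*x)) / sinh (k * L)\<bar> \<le> \<bar>a\<bar> + \<bar>b\<bar>"
proof -
  have S: "sinh (k*L) > 0" using k L by simp
  have s1: "0 \<le> sinh (k*(L-x))" "sinh (k*(L-x)) \<le> sinh (k*L)" using x k by (auto simp: mult_left_mono)
  have s2: "0 \<le> sinh (k*x)" "sinh (k*x) \<le> sinh (k*L)" using x k by (auto simp: mult_left_mono)
  have "\<bar>a * sinh (k*(L - x)) + b * sinh (k*x)\<bar> \<le> \<bar>a\<bar> * sinh (k*L) + \<bar>b\<bar> * sinh (k*L)"
  proof -
    have "\<bar>a * sinh (k*(L - x))\<bar> \<le> \<bar>a\<bar> * sinh (k*L)" using s1 by (simp add: abs_mult mult_left_mono)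
    moreover have "\<bar>b * sinh (k*x)\<bar> \<le> \<bar>b\<bar> * sinh (k*L)" using s2 by (simp add: abs_mult mult_left_mono)
    ultimately show ?thesis by (smt (verit) abs_triangle_ineq)
  qed
  thus ?thesis using S by (simp add: divide_le_eq distrib_right)
qed


definition Dk :: "real \<Rightarrow> real \<Rightarrow> real" where
  "Dk \<alpha> k = cosh (k*pi) + \<alpha> * sinh (k*pi) / (4*k)"

definition qk :: "real \<Rightarrow> real \<Rightarrow> real" where
  "qk \<alpha> k = Dk \<alpha> k - sqrt ((Dk \<alpha> k)^2 - 1)"

definition Phi :: "real \<Rightarrow> real \<Rightarrow> real \<Rightarrow> real" where
  "Phi \<alpha> \<theta> k = 2*k*(qk \<alpha> k - cosh (k*pi)) / sinh (k*pi)
     - k * (cosh (k*(pi+\<theta>)) - 1) / sinh (k*(pi+\<theta>))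
     - k * (cosh (k*(pi-\<theta>)) - 1) / sinh (k*(pi-\<theta>)) - \<alpha>"

lemma cosh_m1_tanh: "(cosh y - 1) / sinh y = tanh (y/2)" if "y > 0" for y :: real
proof -
  define z where "z = y/2"
  have y: "y = 2*z" by (simp add: z_def)
  have z0: "z > 0" using that by (simp add: z_def)
  have "cosh (2*z) - 1 = 2 * (sinh z)^2" using cosh_double[of z] cosh_square_eq[of z] by simp
  moreover have "sinh (2*z) = 2 * sinh z * cosh z" by (rule sinh_double)
  moreover have "sinh z \<noteq> 0" using z0 by simp
  ultimately show ?thesis unfolding y tanh_def by (simp add: power2_eq_square field_simps z_def)
qed

lemma pos_ratio:
  fixes y k :: real
  assumes y: "y > 0" and k: "k > 0"
  shows "0 < k * (cosh y - 1) / sinh y"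
proof -
  have a: "cosh y - 1 > 0" using cosh_gt_1[of y] y by simp
  have b: "sinh y > 0" using y by simp
  show ?thesis using mult_pos_pos[OF k a] b by simp
qed

lemma tanh_pos: "x > 0 \<Longrightarrow> tanh x > (0::real)" by simp

lemma tanh_concave:
  fixes a d :: real
  assumes d: "0 < d" and da: "d < a"
  shows "tanh (a+d) + tanh (a-d) < 2 * tanh a"
proof -
  define A where "A = tanh a"
  define t where "t = tanh d"
  have A0: "0 < A" "A < 1" using d da tanh_real_lt_1[of a] by (simp_all add: A_def)
  have t0: "0 < t" "t < 1" using d tanh_real_lt_1[of d] by (simp_all add: t_def)
  have e1: "tanh (a+d) = (A + t) / (1 + A*t)" unfolding A_def t_def by (rule tanh_add) simp_all
  have e2: "tanh (a-d) = (A - t) / (1 - A*t)"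
    using tanh_add[of a "-d"] unfolding A_def t_def by (simp add: tanh_minus)
  have At: "A*t < 1" using mult_strict_mono[of A 1 t 1] A0 t0 by simp
  have p: "0 < 1 + A*t" "0 < 1 - A*t" using A0 t0 At by (simp_all add: add_pos_pos)
  have "(A + t) / (1 + A*t) + (A - t) / (1 - A*t) = 2*A*(1 - t^2) / (1 - (A*t)^2)"
    using p by (simp add: field_simps power2_eq_square)
  also have "\<dots> < 2*A"
  proof -
    have "(A*t)*(A*t) < t*t" using mult_strict_mono[of "A*t" t "A*t" t] A0 t0 At
      by (simp add: mult_strict_right_mono)
    hence "1 - t^2 < 1 - (A*t)^2" by (simp add: power2_eq_square)
    moreover have "0 < 1 - (A*t)^2" using mult_strict_mono[of "A*t" 1 "A*t" 1] At A0 t0 by (simp add: power2_eq_square)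
    moreover have "0 < 1 - t^2" using mult_strict_mono[of t 1 t 1] t0 by (simp add: power2_eq_square)
    ultimately show ?thesis using A0 by (simp add: field_simps)
  qed
  finally show ?thesis using e1 e2 A_def by simp
qed

lemma hk_mono:
  fixes k k' :: real
  assumes "0 < k" "k < k'"
  shows "k * tanh (k*pi/2) < k' * tanh (k'*pi/2)"
proof -
  have "tanh (k*pi/2) < tanh (k'*pi/2)" using assms by (simp add: divide_strict_right_mono)
  moreover have "0 < tanh (k*pi/2)" using assms by simp
  ultimately show ?thesis using assms mult_strict_mono[of k k' "tanh (k*pi/2)" "tanh (k'*pi/2)"] by auto
qed

lemma Dk_m1:
  assumes k: "k > 0"
  shows "Dk \<alpha> k - 1 = sinh (k*pi) / (4*k) * (4*k*tanh (k*pi/2) + \<alpha>)"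
proof -
  have "cosh (k*pi) - 1 = sinh (k*pi) * tanh (k*pi/2)"
    using cosh_m1_tanh[of "k*pi"] k by (simp add: field_simps)
  thus ?thesis unfolding Dk_def using k by (simp add: field_simps)
qed

lemma root_exists:
  fixes \<alpha> \<theta> \<kappa>0 :: real
  assumes a: "\<alpha> < 0" and th: "0 < \<theta>" "\<theta> < pi" and k0: "\<kappa>0 > 0"
    and kt: "\<kappa>0 * tanh (\<kappa>0 * pi) = - \<alpha> / 2"
  shows "\<exists>k. 0 < k \<and> k < \<kappa>0 \<and> (\<forall>k'\<ge>k. Dk \<alpha> k' > 1) \<and> Phi \<alpha> \<theta> k = 0"
proof -
  define h where "h = (\<lambda>k::real. 4*k*tanh (k*pi/2))"
  have h0: "h 0 \<le> - \<alpha>" using a by (simp add: h_def)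
  have hk0: "- \<alpha> < h \<kappa>0"
  proof -
    have ineq: "2*t/(1 + t^2) < 2*t" if t: "t > 0" for t :: real
    proof -
      have "1 < 1 + t*t" using t by simp
      hence "2*t*1 < 2*t*(1+t*t)" by (rule mult_strict_left_mono) (use t in simp)
      moreover have "0 < 1 + t*t" using t by (simp add: add_pos_pos)
      ultimately show ?thesis by (simp add: divide_less_eq power2_eq_square)
    qed
    have e: "tanh (\<kappa>0*pi/2 + \<kappa>0*pi/2) = 2*tanh (\<kappa>0*pi/2) / (1 + (tanh (\<kappa>0*pi/2))^2)"
      by (subst tanh_add) (simp_all add: power2_eq_square)
    have tp: "0 < tanh (\<kappa>0*pi/2)" using k0 by simp
    have "tanh (\<kappa>0*pi/2 + \<kappa>0*pi/2) < 2 * tanh (\<kappa>0*pi/2)" unfolding e by (rule ineq[OF tp])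
    moreover have "\<kappa>0*pi/2 + \<kappa>0*pi/2 = \<kappa>0*pi" by simp
    ultimately have "tanh (\<kappa>0*pi) < 2 * tanh (\<kappa>0*pi/2)" by simp
    hence "2*\<kappa>0*tanh (\<kappa>0*pi) < 4*\<kappa>0*tanh (\<kappa>0*pi/2)" using k0 by simp
    thus ?thesis using kt by (simp add: h_def)
  qed
  have ch: "continuous_on {0..\<kappa>0} h" unfolding h_def by (intro continuous_intros) auto
  obtain kb where kb: "0 \<le> kb" "kb \<le> \<kappa>0" "h kb = - \<alpha>"
    using IVT'[of h 0 "-\<alpha>" \<kappa>0, OF h0 less_imp_le[OF hk0] less_imp_le[OF k0] ch] by blast
  have kb0: "kb > 0" using kb a by (cases "kb = 0") (auto simp: h_def)
  have kbk0: "kb < \<kappa>0" using kb hk0 by (cases "kb = \<kappa>0") auto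
  have Dpos: "Dk \<alpha> k' > 1" if "k' > kb" for k'
  proof -
    have "h kb < h k'" using hk_mono[OF kb0 that] by (simp add: h_def)
    hence "4*k'*tanh (k'*pi/2) + \<alpha> > 0" using kb by (simp add: h_def)
    moreover have "sinh (k'*pi) / (4*k') > 0" using that kb0 by simp
    ultimately have "Dk \<alpha> k' - 1 > 0" using Dk_m1[of k' \<alpha>] that kb0 by simp
    thus ?thesis by simp
  qed
  have Db: "Dk \<alpha> kb = 1" using Dk_m1[OF kb0, of \<alpha>] kb by (simp add: h_def)
  have Pb: "Phi \<alpha> \<theta> kb > 0"
  proof -
    have q1: "qk \<alpha> kb = 1" by (simp add: qk_def Db)
    have t1: "(cosh (kb*pi) - 1) / sinh (kb*pi) = tanh (kb*pi/2)" using cosh_m1_tanh[of "kb*pi"] kb0 by simp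
    have t2: "(cosh (kb*(pi+\<theta>)) - 1) / sinh (kb*(pi+\<theta>)) = tanh (kb*pi/2 + kb*\<theta>/2)"
      using cosh_m1_tanh[of "kb*(pi+\<theta>)"] kb0 th by (simp add: add_pos_pos field_simps)
    have t3: "(cosh (kb*(pi-\<theta>)) - 1) / sinh (kb*(pi-\<theta>)) = tanh (kb*pi/2 - kb*\<theta>/2)"
      using cosh_m1_tanh[of "kb*(pi-\<theta>)"] kb0 th by (simp add: field_simps)
    have cc: "tanh (kb*pi/2 + kb*\<theta>/2) + tanh (kb*pi/2 - kb*\<theta>/2) < 2 * tanh (kb*pi/2)"
      by (rule tanh_concave) (use kb0 th in \<open>simp_all add: divide_strict_right_mono\<close>)
    have al: "\<alpha> = - 4*kb*tanh (kb*pi/2)" using kb by (simp add: h_def)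
    have "Phi \<alpha> \<theta> kb = 2*kb*tanh (kb*pi/2) - kb * (tanh (kb*pi/2 + kb*\<theta>/2) + tanh (kb*pi/2 - kb*\<theta>/2))"
    proof -
      have "2*kb*(qk \<alpha> kb - cosh (kb*pi)) / sinh (kb*pi) = - 2*kb*((cosh (kb*pi) - 1) / sinh (kb*pi))"
        unfolding q1 by (simp add: field_simps)
      moreover have "kb * (cosh (kb*(pi+\<theta>)) - 1) / sinh (kb*(pi+\<theta>)) = kb * ((cosh (kb*(pi+\<theta>)) - 1) / sinh (kb*(pi+\<theta>)))"
        by simp
      moreover have "kb * (cosh (kb*(pi-\<theta>)) - 1) / sinh (kb*(pi-\<theta>)) = kb * ((cosh (kb*(pi-\<theta>)) - 1) / sinh (kb*(pi-\<theta>)))"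
        by simp
      ultimately show ?thesis unfolding Phi_def t1 t2 t3 al by (simp add: algebra_simps)
    qed
    moreover have "kb * (tanh (kb*pi/2 + kb*\<theta>/2) + tanh (kb*pi/2 - kb*\<theta>/2)) < kb * (2 * tanh (kb*pi/2))"
      by (rule mult_strict_left_mono[OF cc kb0])
    ultimately show ?thesis by (simp add: algebra_simps)
  qed
  have P0: "Phi \<alpha> \<theta> \<kappa>0 < 0"
  proof -
    define c where "c = cosh (\<kappa>0*pi)"
    define s where "s = sinh (\<kappa>0*pi)"
    have c1: "c > 1" using cosh_gt_1[of "\<kappa>0*pi"] k0 by (simp add: c_def)
    have s0: "s > 0" using k0 by (simp add: s_def)
    have cs: "c^2 = s^2 + 1" unfolding c_def s_def by (rule cosh_square_eq)
    have al: "\<alpha> = - 2*\<kappa>0 * s / c" using kt by (simp add: tanh_def c_def s_def field_simps)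
    have D: "Dk \<alpha> \<kappa>0 = (c^2 + 1) / (2*c)"
      unfolding Dk_def c_def[symmetric] s_def[symmetric] al using k0 c1 cs
      by (simp add: field_simps power2_eq_square)
    have "(Dk \<alpha> \<kappa>0)^2 - 1 = ((c^2 - 1) / (2*c))^2"
      unfolding D using c1 by (simp add: field_simps power2_eq_square)
    hence "sqrt ((Dk \<alpha> \<kappa>0)^2 - 1) = \<bar>(c^2 - 1) / (2*c)\<bar>" by (simp only: real_sqrt_abs)
    moreover have "(c^2 - 1) / (2*c) > 0"
    proof -
      have "1*1 < c*c" using c1 mult_strict_mono[of 1 c 1 c] by simp
      thus ?thesis using c1 by (simp add: power2_eq_square)
    qed
    ultimately have sq: "sqrt ((Dk \<alpha> \<kappa>0)^2 - 1) = (c^2 - 1) / (2*c)" by (simp only: abs_of_pos)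
    have q: "qk \<alpha> \<kappa>0 = 1 / c" unfolding qk_def sq unfolding D using c1 by (simp add: field_simps power2_eq_square)
    have first: "2*\<kappa>0*(qk \<alpha> \<kappa>0 - cosh (\<kappa>0*pi)) / sinh (\<kappa>0*pi) - \<alpha> = 0"
      unfolding q unfolding c_def[symmetric] s_def[symmetric] al using c1 s0 cs
      by (simp add: field_simps power2_eq_square)
    have p1: "\<kappa>0 * (cosh (\<kappa>0*(pi+\<theta>)) - 1) / sinh (\<kappa>0*(pi+\<theta>)) > 0"
    proof -
      have "\<kappa>0*(pi+\<theta>) > 0" using k0 th by (simp add: add_pos_pos)
      thus ?thesis using pos_ratio k0 by blast
    qed
    have p2: "\<kappa>0 * (cosh (\<kappa>0*(pi-\<theta>)) - 1) / sinh (\<kappa>0*(pi-\<theta>)) > 0"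
    proof -
      have "\<kappa>0*(pi-\<theta>) > 0" using k0 th by simp
      thus ?thesis using pos_ratio k0 by blast
    qed
    show ?thesis using first p1 p2 unfolding Phi_def by linarith
  qed
  have cP: "continuous_on {kb..\<kappa>0} (Phi \<alpha> \<theta>)"
  proof -
    have "\<forall>k\<in>{kb..\<kappa>0}. k > 0" using kb0 by auto
    thus ?thesis unfolding Phi_def qk_def Dk_def using th
      by (intro continuous_intros) (auto simp: add_pos_pos)
  qed
  obtain k where k: "kb \<le> k" "k \<le> \<kappa>0" "Phi \<alpha> \<theta> k = 0"
    using IVT2'[of "Phi \<alpha> \<theta>" \<kappa>0 0 kb, OF less_imp_le[OF P0] less_imp_le[OF Pb] less_imp_le[OF kbk0] cP] by blast
  have "k \<noteq> kb" using k Pb by auto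
  hence kgt: "k > kb" using k by simp
  have "k \<noteq> \<kappa>0" using k P0 by auto
  hence klt: "k < \<kappa>0" using k by simp
  show ?thesis
    by (intro exI[of _ k] conjI allI impI Dpos k(3) klt) (use kgt kb0 in auto)
qed


lemma vs_regular:
  fixes l :: "edge \<Rightarrow> real" and u :: "int \<Rightarrow> real"
  assumes k: "k > 0" and l1: "l (j,True) = pi" "l (j,False) = pi" "l (j-1,True) = pi" "l (j-1,False) = pi"
    and rec: "u (j+1) + u (j-1) = 2 * Dk \<alpha> k * u j"
  shows "k * (u (j+1) - cosh (k * l (j,True)) * u j) / sinh (k * l (j,True))
           + k * (u (j+1) - cosh (k * l (j,False)) * u j) / sinh (k * l (j,False))
           - k * (cosh (k * l (j-1,True)) * u j - u (j-1)) / sinh (k * l (j-1,True))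
           - k * (cosh (k * l (j-1,False)) * u j - u (j-1)) / sinh (k * l (j-1,False))
           = \<alpha> * u j"
proof -
  define s where "s = sinh (k*pi)"
  define c where "c = cosh (k*pi)"
  have s0: "s > 0" using k by (simp add: s_def)
  have "k * (u (j+1) - c * u j) / s + k * (u (j+1) - c * u j) / s
        - k * (c * u j - u (j-1)) / s - k * (c * u j - u (j-1)) / s
        = (2*k*(u (j+1) + u (j-1) - 2*c*u j)) / s"
    by (simp add: add_divide_distrib[symmetric] diff_divide_distrib[symmetric] algebra_simps)
  also have "u (j+1) + u (j-1) - 2*c*u j = \<alpha> * s / (2*k) * u j"
    unfolding rec Dk_def c_def s_def using k by (simp add: field_simps)
  also have "2*k*(\<alpha> * s / (2*k) * u j) / s = \<alpha> * u j" using k s0 by (simp add: field_simps)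
  finally show ?thesis unfolding l1 s_def c_def .
qed

lemma chain_len_sym: "chain_len \<theta> (- j, b) = chain_len \<theta> (j, b)"
  by (simp add: chain_len_def)

lemma eigen_construct:
  fixes \<alpha> \<theta> k :: real
  assumes th: "0 < \<theta>" "\<theta> < pi" and k: "k > 0" and D1: "Dk \<alpha> k > 1" and P: "Phi \<alpha> \<theta> k = 0"
  shows "even_eigenvalue \<theta> \<alpha> (- (k^2))"
proof -
  define D where "D = Dk \<alpha> k"
  define q where "q = qk \<alpha> k"
  have D1': "D > 1" using D1 by (simp add: D_def)
  have sq: "sqrt (D^2 - 1) < D"
  proof -
    have "sqrt (D^2 - 1) < sqrt (D^2)" by (rule real_sqrt_less_mono) simp
    thus ?thesis using D1' by simp
  qed
  have q0: "q > 0" using sq by (simp add: q_def qk_def D_def[symmetric])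
  have q1: "q < 1"
  proof -
    have "(D-1)^2 < D^2 - 1" using D1' by (simp add: power2_eq_square algebra_simps)
    hence "sqrt ((D-1)^2) < sqrt (D^2 - 1)" by (rule real_sqrt_less_mono)
    thus ?thesis using D1' by (simp add: q_def qk_def D_def[symmetric])
  qed
  have qq: "q^2 + 1 = 2 * D * q"
  proof -
    have "(sqrt (D^2-1))^2 = D^2 - 1" using D1' by (simp add: abs_square_le_1)
    thus ?thesis unfolding q_def qk_def D_def[symmetric] by (simp add: power2_eq_square algebra_simps)
  qed
  define u where "u = (\<lambda>j::int. q ^ nat (if j \<ge> 1 then j - 1 else - j))"
  have u0: "u 0 = 1" "u 1 = 1" "u 2 = q" "u (-1) = q" by (simp_all add: u_def)
  have usym: "u (1 - j) = u j" for j by (simp add: u_def)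
  have urec: "u (j+1) + u (j-1) = 2 * D * u j" if "j \<ge> 2 \<or> j \<le> -1" for j
  proof -
    have gen: "q^(n+2) + q^n = 2 * D * q^(n+1)" for n
    proof -
      have "q^(n+2) + q^n = q^n * (q^2 + 1)" by (simp add: power_add algebra_simps power2_eq_square)
      also have "\<dots> = 2 * D * q^(n+1)" unfolding qq by (simp add: algebra_simps)
      finally show ?thesis .
    qed
    from that show ?thesis
    proof
      assume j: "j \<ge> 2"
      define n where "n = nat (j - 2)"
      have jn: "j = int n + 2" using j by (simp add: n_def)
      have "u (j+1) = q^(n + 2)" "u (j-1) = q^n" "u j = q^(n + 1)"
        unfolding u_def jn by (simp_all add: nat_add_distrib add.commute)
      thus ?thesis using gen[of n] by simp
    next
      assume j: "j \<le> -1"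
      define n where "n = nat (-j-1)"
      have jn: "j = - int n - 1" using j by (simp add: n_def)
      have "u (j-1) = q^(n + 2)" "u (j+1) = q^n" "u j = q^(n + 1)"
        unfolding u_def jn by (simp_all add: nat_add_distrib add.commute)
      thus ?thesis using gen[of n] by simp
    qed
  qed
  define l where "l = chain_len \<theta>"
  have lp: "l e > 0" for e unfolding l_def by (rule chain_len_pos) (use th in auto)
  have lpi: "l (j,b) = pi" if "j \<noteq> 0" for j b using that by (simp add: l_def chain_len_nz)
  have lle: "l e \<le> 2*pi" for e using th by (auto simp: l_def chain_len_def)
  define \<psi> where "\<psi> = (\<lambda>e x. (u (fst e) * sinh (k*(l e - x)) + u (fst e + 1) * sinh (k*x)) / sinh (k * l e))"
  have vs: "k * (u (j+1) - cosh (k * l (j,True)) * u j) / sinh (k * l (j,True))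
           + k * (u (j+1) - cosh (k * l (j,False)) * u j) / sinh (k * l (j,False))
           - k * (cosh (k * l (j-1,True)) * u j - u (j-1)) / sinh (k * l (j-1,True))
           - k * (cosh (k * l (j-1,False)) * u j - u (j-1)) / sinh (k * l (j-1,False))
           = \<alpha> * u j" for j
  proof -
    consider "j \<ge> 2 \<or> j \<le> -1" | "j = 1" | "j = 0" by linarith
    thus ?thesis
    proof cases
      case 1
      hence nz: "j \<noteq> 0" "j - 1 \<noteq> 0" by auto
      show ?thesis
        by (rule vs_regular[OF k lpi[OF nz(1)] lpi[OF nz(1)] lpi[OF nz(2)] lpi[OF nz(2)]])
           (use urec[OF 1] in \<open>simp add: D_def\<close>)
    next
      case 2
      have lT: "l (0,True) = pi + \<theta>" and lF: "l (0,False) = pi - \<theta>" by (simp_all add: l_def chain_len_def)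
      have "2*k*(q - cosh (k*pi)) / sinh (k*pi) - k * (cosh (k*(pi+\<theta>)) - 1) / sinh (k*(pi+\<theta>))
         - k * (cosh (k*(pi-\<theta>)) - 1) / sinh (k*(pi-\<theta>)) = \<alpha>"
        using P unfolding Phi_def q_def by simp
      moreover have "k * (q - cosh (k*pi)) / sinh (k*pi) + k * (q - cosh (k*pi)) / sinh (k*pi)
          = 2*k*(q - cosh (k*pi)) / sinh (k*pi)" by (simp add: add_divide_distrib[symmetric])
      ultimately show ?thesis using 2 by (simp add: lpi lT lF u0 algebra_simps)
    next
      case 3
      have lT: "l (0,True) = pi + \<theta>" and lF: "l (0,False) = pi - \<theta>" by (simp_all add: l_def chain_len_def)
      have "2*k*(q - cosh (k*pi)) / sinh (k*pi) - k * (cosh (k*(pi+\<theta>)) - 1) / sinh (k*(pi+\<theta>))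
         - k * (cosh (k*(pi-\<theta>)) - 1) / sinh (k*(pi-\<theta>)) = \<alpha>"
        using P unfolding Phi_def q_def by simp
      moreover have "k * (q - cosh (k*pi)) / sinh (k*pi) + k * (q - cosh (k*pi)) / sinh (k*pi)
          = 2*k*(q - cosh (k*pi)) / sinh (k*pi)" by (simp add: add_divide_distrib[symmetric])
      moreover have "k * (1 - cosh (k*(pi+\<theta>))) / sinh (k*(pi+\<theta>)) = - (k * (cosh (k*(pi+\<theta>)) - 1) / sinh (k*(pi+\<theta>)))"
        by (simp add: algebra_simps minus_divide_left)
      moreover have "k * (1 - cosh (k*(pi-\<theta>))) / sinh (k*(pi-\<theta>)) = - (k * (cosh (k*(pi-\<theta>)) - 1) / sinh (k*(pi-\<theta>)))"
        by (simp add: algebra_simps minus_divide_left)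
      moreover have "k * (cosh (k*pi) - q) / sinh (k*pi) = - (k * (q - cosh (k*pi)) / sinh (k*pi))"
        by (simp add: algebra_simps minus_divide_left)
      ultimately show ?thesis using 3 by (simp add: lpi lT lF u0 algebra_simps)
    qed
  qed
  have bound: "integral {0..l e} (\<lambda>x. (\<psi> e x)^2) \<le> 4*pi * ((u (fst e))^2 + (u (fst e + 1))^2)" for e
  proof -
    have "integral {0..l e} (\<lambda>x. (\<psi> e x)^2) \<le> l e * (\<bar>u (fst e)\<bar> + \<bar>u (fst e + 1)\<bar>)^2"
    proof (rule integral_sq_le)
      show "0 \<le> l e" using lp[of e] by simp
      show "continuous_on {0..l e} (\<psi> e)" unfolding \<psi>_def using k lp[of e] by (intro continuous_intros) simp
      fix x assume x: "x \<in> {0..l e}"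
      have "\<bar>\<psi> e x\<bar> \<le> \<bar>u (fst e)\<bar> + \<bar>u (fst e + 1)\<bar>" unfolding \<psi>_def by (rule harmonic_bound[OF k lp x])
      thus "(\<psi> e x)^2 \<le> (\<bar>u (fst e)\<bar> + \<bar>u (fst e + 1)\<bar>)^2"
        by (metis abs_ge_zero abs_le_square_iff abs_of_nonneg order_trans power2_abs)
    qed
    also have "\<dots> \<le> 2*pi * (2 * ((u (fst e))^2 + (u (fst e + 1))^2))"
    proof (rule mult_mono)
      show "(\<bar>u (fst e)\<bar> + \<bar>u (fst e + 1)\<bar>)^2 \<le> 2 * ((u (fst e))^2 + (u (fst e + 1))^2)"
        using sq_add_le[of "\<bar>u (fst e)\<bar>" "\<bar>u (fst e + 1)\<bar>"] by simp
    qed (use lle[of e] in auto)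
    also have "\<dots> = 4*pi * ((u (fst e))^2 + (u (fst e + 1))^2)" by (simp add: algebra_simps)
    finally show ?thesis .
  qed
  have us: "(\<lambda>j. (u j)^2) summable_on UNIV"
  proof -
    have "(\<lambda>j::int. (q^2) ^ nat (if j \<ge> 1 then j - 1 else - j)) summable_on UNIV"
      by (rule summable_geom_int) (use q0 q1 in \<open>simp_all add: power_less_one_iff abs_square_less_1\<close>)
    thus ?thesis by (simp add: u_def power_mult[symmetric] power_mult_distrib mult.commute)
  qed
  have Bs: "(\<lambda>e::edge. 4*pi * ((u (fst e))^2 + (u (fst e + 1))^2)) summable_on UNIV"
    by (intro summable_on_cmult_right summable_on_add summable_int_edge us summable_int_shift[of "\<lambda>j. (u j)^2", simplified])
  have L2: "L2_graph l \<psi>"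
  proof (rule L2_from_bound[OF _ bound Bs])
    fix e
    have "l e \<noteq> 0" using lp[of e] by simp
    thus "continuous_on {0..l e} (\<psi> e)" unfolding \<psi>_def using k by (intro continuous_intros) simp
  qed
  have H: "H_rel l \<alpha> \<psi> (\<lambda>e x. - (k^2) * \<psi> e x)"
    by (rule harmonic_graph[OF k lp \<psi>_def vs L2])
  have ev: "even_fn l \<psi>"
    unfolding even_fn_def
  proof (intro allI impI)
    fix j b x assume x: "x \<in> {0..l (j, b)}"
    have ls: "l (- j, b) = l (j, b)" by (simp add: l_def chain_len_sym)
    have a: "u (- j) = u (j+1)" using usym[of "j+1"] by simp
    have b: "u (- j + 1) = u j" using usym[of j] by (simp add: algebra_simps)
    show "\<psi> (- j, b) (l (j, b) - x) = \<psi> (j, b) x"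
      unfolding \<psi>_def by (simp add: ls a b usym algebra_simps)
  qed
  have nz: "\<not> ae_eq_graph l \<psi> (\<lambda>e x. 0)"
  proof
    assume "ae_eq_graph l \<psi> (\<lambda>e x. 0)"
    hence ng: "negligible {x \<in> {0..l (0,True)}. \<psi> (0,True) x \<noteq> 0}" unfolding ae_eq_graph_def by blast
    define L where "L = l (0,True)"
    have L0: "L > 0" using lp by (simp add: L_def)
    have "{x \<in> {0..L}. \<psi> (0,True) x \<noteq> 0} = {0..L}"
    proof safe
      fix x assume x: "x \<in> {0..L}" "\<psi> (0, True) x = 0"
      have s1: "sinh (k*(L-x)) \<ge> 0" "sinh (k*x) \<ge> 0" using x k by auto
      have "sinh (k*(L-x)) + sinh (k*x) > 0"
      proof (cases "x = 0")
        case True thus ?thesis using k L0 by simp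
      next
        case False hence "x > 0" using x by simp
        thus ?thesis using s1 k by (simp add: add_nonneg_pos)
      qed
      moreover have "sinh (k * L) > 0" using k L0 by simp
      ultimately have "\<psi> (0,True) x > 0" unfolding \<psi>_def using u0 by (simp add: L_def[symmetric])
      with x(2) show False by simp
    qed
    with ng have "negligible {0..L}" by (simp add: L_def)
    thus False using L0 negligible_interval(1)[of 0 L] by simp
  qed
  show ?thesis unfolding even_eigenvalue_def l_def[symmetric]
    using H ev nz by blast
qed


definition Fi :: "(real \<Rightarrow> real) \<Rightarrow> real \<Rightarrow> real" where
  "Fi g x = integral {0..x} g"
definition Icp :: "real \<Rightarrow> (real \<Rightarrow> real) \<Rightarrow> real \<Rightarrow> real" where
  "Icp k g x = integral {0..x} (\<lambda>y. cosh (k*y) * Fi g y)"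
definition Isp :: "real \<Rightarrow> (real \<Rightarrow> real) \<Rightarrow> real \<Rightarrow> real" where
  "Isp k g x = integral {0..x} (\<lambda>y. sinh (k*y) * Fi g y)"
definition Qp :: "real \<Rightarrow> (real \<Rightarrow> real) \<Rightarrow> real \<Rightarrow> real" where
  "Qp k g x = sinh (k*x) * Isp k g x - cosh (k*x) * Icp k g x"
definition Rp :: "real \<Rightarrow> (real \<Rightarrow> real) \<Rightarrow> real \<Rightarrow> real" where
  "Rp k g x = k * (cosh (k*x) * Isp k g x - sinh (k*x) * Icp k g x)"

lemma abs_int_props:
  fixes g :: "real \<Rightarrow> real"
  assumes gi: "g absolutely_integrable_on {0..pi}"
  shows "g integrable_on {0..pi}" "(\<lambda>x. \<bar>g x\<bar>) integrable_on {0..pi}"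
  using gi unfolding absolutely_integrable_on_def by auto

lemma Fi_bound:
  fixes g :: "real \<Rightarrow> real"
  assumes gi: "g absolutely_integrable_on {0..pi}" and x: "x \<in> {0..pi}"
  shows "\<bar>Fi g x\<bar> \<le> integral {0..pi} (\<lambda>x. \<bar>g x\<bar>)"
proof -
  have ga: "(\<lambda>x. \<bar>g x\<bar>) integrable_on {0..pi}" by (rule abs_int_props(2)[OF gi])
  have g1: "g integrable_on {0..x}" by (rule integrable_on_subinterval[OF abs_int_props(1)[OF gi]]) (use x in auto)
  have g2: "(\<lambda>x. \<bar>g x\<bar>) integrable_on {0..x}" by (rule integrable_on_subinterval[OF ga]) (use x in auto)
  have "\<bar>Fi g x\<bar> \<le> integral {0..x} (\<lambda>x. \<bar>g x\<bar>)"
    unfolding Fi_def using integral_norm_bound_integral[OF g1 g2] by simp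
  also have "\<dots> \<le> integral {0..pi} (\<lambda>x. \<bar>g x\<bar>)"
    by (rule integral_subset_le[OF _ g2 ga]) (use x in auto)
  finally show ?thesis .
qed

lemma ep_props:
  fixes g :: "real \<Rightarrow> real" and k :: real
  assumes k: "k > 0" and gi: "g absolutely_integrable_on {0..pi}"
  defines "m \<equiv> integral {0..pi} (\<lambda>x. \<bar>g x\<bar>)"
  shows "Qp k g 0 = 0" "Rp k g 0 = 0"
    "\<And>x. x \<in> {0..pi} \<Longrightarrow> (Qp k g has_real_derivative (Rp k g x - Fi g x)) (at x within {0..pi})"
    "\<And>x. x \<in> {0..pi} \<Longrightarrow> (Rp k g has_real_derivative k^2 * Qp k g x) (at x within {0..pi})"
    "\<And>x. x \<in> {0..pi} \<Longrightarrow> \<bar>Qp k g x\<bar> \<le> 2*pi*(cosh (k*pi))^2 * m"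
    "\<bar>Rp k g pi\<bar> \<le> 2*k*pi*(cosh (k*pi))^2 * m"
    "\<bar>Fi g pi\<bar> \<le> m"
    "continuous_on {0..pi} (Qp k g)"
proof -
  show "Qp k g 0 = 0" "Rp k g 0 = 0" by (simp_all add: Qp_def Rp_def Isp_def Icp_def)
  have gI: "g integrable_on {0..pi}" by (rule abs_int_props(1)[OF gi])
  have cF: "continuous_on {0..pi} (Fi g)" unfolding Fi_def by (rule indefinite_integral_continuous_1[OF gI])
  have dIc: "(Icp k g has_real_derivative cosh (k*x) * Fi g x) (at x within {0..pi})" if "x \<in> {0..pi}" for x
    unfolding Icp_def has_real_derivative_iff_has_vector_derivative
    by (intro integral_has_vector_derivative continuous_intros cF that)
  have dIs: "(Isp k g has_real_derivative sinh (k*x) * Fi g x) (at x within {0..pi})" if "x \<in> {0..pi}" for x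
    unfolding Isp_def has_real_derivative_iff_has_vector_derivative
    by (intro integral_has_vector_derivative continuous_intros cF that)
  have ch: "(cosh (k*x))^2 = (sinh (k*x))^2 + 1" for x by (rule cosh_square_eq)
  show "(Qp k g has_real_derivative (Rp k g x - Fi g x)) (at x within {0..pi})" if x: "x \<in> {0..pi}" for x
  proof -
    have "(Qp k g has_real_derivative
       (cosh (k*x) * k * Isp k g x + sinh (k*x) * (sinh (k*x) * Fi g x))
       - (sinh (k*x) * k * Icp k g x + cosh (k*x) * (cosh (k*x) * Fi g x))) (at x within {0..pi})"
      unfolding Qp_def[abs_def] by (auto intro!: derivative_eq_intros dIc[OF x] dIs[OF x])
    moreover have "(cosh (k*x) * k * Isp k g x + sinh (k*x) * (sinh (k*x) * Fi g x))
       - (sinh (k*x) * k * Icp k g x + cosh (k*x) * (cosh (k*x) * Fi g x)) = Rp k g x - Fi g x"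
      unfolding Rp_def using ch[of x] by (simp add: algebra_simps power2_eq_square)
    ultimately show ?thesis by simp
  qed
  show "(Rp k g has_real_derivative k^2 * Qp k g x) (at x within {0..pi})" if x: "x \<in> {0..pi}" for x
  proof -
    have "(Rp k g has_real_derivative
       k * ((sinh (k*x) * k * Isp k g x + cosh (k*x) * (sinh (k*x) * Fi g x))
       - (cosh (k*x) * k * Icp k g x + sinh (k*x) * (cosh (k*x) * Fi g x)))) (at x within {0..pi})"
      unfolding Rp_def[abs_def] by (auto intro!: derivative_eq_intros dIc[OF x] dIs[OF x])
    moreover have "k * ((sinh (k*x) * k * Isp k g x + cosh (k*x) * (sinh (k*x) * Fi g x))
       - (cosh (k*x) * k * Icp k g x + sinh (k*x) * (cosh (k*x) * Fi g x))) = k^2 * Qp k g x"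
      unfolding Qp_def by (simp add: algebra_simps power2_eq_square)
    ultimately show ?thesis by simp
  qed
  define c where "c = cosh (k*pi)"
  have c1: "c \<ge> 1" by (simp add: c_def cosh_real_ge_1)
  have Fb: "\<bar>Fi g x\<bar> \<le> m" if "x \<in> {0..pi}" for x unfolding m_def by (rule Fi_bound[OF gi that])
  show "\<bar>Fi g pi\<bar> \<le> m" by (rule Fb) simp
  have m0: "m \<ge> 0" unfolding m_def
    by (intro integral_nonneg abs_int_props(2)[OF gi]) simp
  have coshle: "cosh (k*y) \<le> c" if "y \<in> {0..pi}" for y
    unfolding c_def using that k by (simp add: cosh_real_nonneg_le_iff mult_left_mono)
  have sinhle: "\<bar>sinh (k*y)\<bar> \<le> c" if "y \<in> {0..pi}" for y
  proof -
    have "\<bar>sinh (k*y)\<bar> \<le> cosh (k*y)"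
    proof -
      have "(sinh (k*y))^2 \<le> (cosh (k*y))^2" using ch[of y] by simp
      thus ?thesis by (metis abs_le_square_iff abs_of_nonneg cosh_real_nonneg)
    qed
    thus ?thesis using coshle[OF that] by simp
  qed
  have Ib: "\<bar>Icp k g x\<bar> \<le> c * m * pi" "\<bar>Isp k g x\<bar> \<le> c * m * pi" if x: "x \<in> {0..pi}" for x
  proof -
    have "norm (Icp k g x) \<le> c * m * (x - 0)"
      unfolding Icp_def
    proof (rule integral_bound)
      show "continuous_on {0..x} (\<lambda>y. cosh (k*y) * Fi g y)"
        by (intro continuous_intros continuous_on_subset[OF cF]) (use x in auto)
      fix t assume t: "t \<in> {0..x}"
      hence t': "t \<in> {0..pi}" using x by auto
      show "norm (cosh (k*t) * Fi g t) \<le> c * m"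
        using mult_mono[OF coshle[OF t'] Fb[OF t']] c1 by (simp add: abs_mult)
    qed (use x in auto)
    also have "\<dots> \<le> c * m * pi" using x c1 m0 by (intro mult_left_mono) auto
    finally show "\<bar>Icp k g x\<bar> \<le> c * m * pi" by simp
    have "norm (Isp k g x) \<le> c * m * (x - 0)"
      unfolding Isp_def
    proof (rule integral_bound)
      show "continuous_on {0..x} (\<lambda>y. sinh (k*y) * Fi g y)"
        by (intro continuous_intros continuous_on_subset[OF cF]) (use x in auto)
      fix t assume t: "t \<in> {0..x}"
      hence t': "t \<in> {0..pi}" using x by auto
      show "norm (sinh (k*t) * Fi g t) \<le> c * m"
        using mult_mono[OF sinhle[OF t'] Fb[OF t']] c1 by (simp add: abs_mult)
    qed (use x in auto)
    also have "\<dots> \<le> c * m * pi" using x c1 m0 by (intro mult_left_mono) auto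
    finally show "\<bar>Isp k g x\<bar> \<le> c * m * pi" by simp
  qed
  have QRb: "\<bar>sinh (k*x) * Isp k g x - cosh (k*x) * Icp k g x\<bar> \<le> 2*pi*c^2 * m" if x: "x \<in> {0..pi}" for x
  proof -
    have "\<bar>sinh (k*x) * Isp k g x\<bar> \<le> c * (c * m * pi)"
      unfolding abs_mult by (rule mult_mono[OF sinhle[OF x] Ib(2)[OF x]]) (use c1 in auto)
    moreover have "\<bar>cosh (k*x) * Icp k g x\<bar> \<le> c * (c * m * pi)"
      using mult_mono[OF coshle[OF x] Ib(1)[OF x]] c1 by (simp add: abs_mult)
    ultimately show ?thesis by (simp add: power2_eq_square algebra_simps abs_le_iff)
  qed
  show "\<bar>Qp k g x\<bar> \<le> 2*pi*(cosh (k*pi))^2 * m" if x: "x \<in> {0..pi}" for x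
    using QRb[OF x] unfolding Qp_def c_def .
  have pi_in: "pi \<in> {0..pi}" by simp
  have "\<bar>cosh (k*pi) * Isp k g pi - sinh (k*pi) * Icp k g pi\<bar> \<le> 2*pi*c^2 * m"
  proof -
    have "\<bar>sinh (k*pi) * Icp k g pi\<bar> \<le> c * (c * m * pi)"
      unfolding abs_mult by (rule mult_mono[OF sinhle[OF pi_in] Ib(1)[OF pi_in]]) (use c1 in auto)
    moreover have "\<bar>cosh (k*pi) * Isp k g pi\<bar> \<le> c * (c * m * pi)"
      using mult_mono[OF coshle[OF pi_in] Ib(2)[OF pi_in]] c1 by (simp add: abs_mult)
    ultimately show ?thesis by (simp add: power2_eq_square algebra_simps abs_le_iff)
  qed
  thus "\<bar>Rp k g pi\<bar> \<le> 2*k*pi*(cosh (k*pi))^2 * m"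
    unfolding Rp_def c_def using k by (simp add: abs_mult mult_left_mono mult.assoc)
  show "continuous_on {0..pi} (Qp k g)"
  proof -
    have "continuous_on {0..pi} (\<lambda>x. sinh (k*x) * Isp k g x - cosh (k*x) * Icp k g x)"
      unfolding Isp_def Icp_def
      by (intro continuous_intros indefinite_integral_continuous_1 integrable_continuous_real cF)
    thus ?thesis by (simp add: Qp_def[abs_def])
  qed
qed


lemma L1_le_L2:
  fixes g :: "real \<Rightarrow> real"
  assumes gm: "g measurable_on {0..pi}" and gs: "(\<lambda>x. (g x)^2) integrable_on {0..pi}"
  shows "g absolutely_integrable_on {0..pi}"
    "(integral {0..pi} (\<lambda>x. \<bar>g x\<bar>))^2 \<le> pi * integral {0..pi} (\<lambda>x. (g x)^2)"
proof -
  have gb: "g \<in> borel_measurable (lebesgue_on {0..pi})"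
    using gm by (simp add: measurable_on_iff_borel_measurable)
  have i2: "(\<lambda>x. (1 + (g x)^2) / 2) integrable_on {0..pi}"
  proof -
    have "(\<lambda>x. 1 + (g x)^2) integrable_on {0..pi}" by (rule integrable_add[OF integrable_const_ivl gs])
    from integrable_on_cmult_left[OF this, of "1/2"] show ?thesis by simp
  qed
  show ga: "g absolutely_integrable_on {0..pi}"
  proof (rule measurable_bounded_by_integrable_imp_absolutely_integrable[OF gb _ i2])
    fix x
    have "0 \<le> (\<bar>g x\<bar> - 1)^2" by simp
    hence "2 * \<bar>g x\<bar> \<le> 1 + (g x)^2" by (simp add: power2_eq_square algebra_simps)
    thus "norm (g x) \<le> (1 + (g x)^2) / 2" by simp
  qed simp
  have gabs: "(\<lambda>x. \<bar>g x\<bar>) integrable_on {0..pi}" using ga unfolding absolutely_integrable_on_def by auto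
  define m where "m = integral {0..pi} (\<lambda>x. \<bar>g x\<bar>)"
  define N where "N = integral {0..pi} (\<lambda>x. (g x)^2)"
  define a where "a = m / pi"
  have "((\<lambda>x. (g x)^2 - 2*a*\<bar>g x\<bar> + a^2) has_integral (N - 2*a*m + a^2 * pi)) {0..pi}"
  proof -
    have h1: "((\<lambda>x. (g x)^2) has_integral N) {0..pi}" using gs by (simp add: N_def has_integral_integral)
    have h2: "((\<lambda>x. 2*a*\<bar>g x\<bar>) has_integral (2*a*m)) {0..pi}"
      using has_integral_mult_right[OF integrable_integral[OF gabs], of "2*a"] by (simp add: m_def)
    have h3: "((\<lambda>x. a^2) has_integral (a^2 * pi)) {0..pi}"
      using has_integral_const_real[of "a^2" 0 pi] by (simp add: mult.commute)
    show ?thesis by (intro has_integral_add has_integral_diff h1 h2 h3)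
  qed
  moreover have "\<And>x. (g x)^2 - 2*a*\<bar>g x\<bar> + a^2 = (\<bar>g x\<bar> - a)^2" by (simp add: power2_eq_square algebra_simps)
  ultimately have "((\<lambda>x. (\<bar>g x\<bar> - a)^2) has_integral (N - 2*a*m + a^2 * pi)) {0..pi}" by simp
  hence "0 \<le> N - 2*a*m + a^2 * pi" by (rule has_integral_nonneg) simp
  hence "0 \<le> N - m^2 / pi" unfolding a_def by (simp add: power2_eq_square field_simps)
  thus "(integral {0..pi} (\<lambda>x. \<bar>g x\<bar>))^2 \<le> pi * integral {0..pi} (\<lambda>x. (g x)^2)"
    unfolding m_def[symmetric] N_def[symmetric] by (simp add: field_simps)
qed


lemma sq3: "(a + b + c)^2 \<le> 3 * (a^2 + b^2 + (c::real)^2)"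
proof -
  have "0 \<le> (a-b)^2 + (b-c)^2 + (a-c)^2" by simp
  thus ?thesis by (simp add: power2_eq_square algebra_simps)
qed

lemma sq4: "(a + b + c + d)^2 \<le> 4 * (a^2 + b^2 + c^2 + (d::real)^2)"
proof -
  have "0 \<le> (a-b)^2 + (a-c)^2 + (a-d)^2 + (b-c)^2 + (b-d)^2 + (c-d)^2" by simp
  thus ?thesis by (simp add: power2_eq_square algebra_simps)
qed

lemma abs_sq_mono: "\<bar>x\<bar> \<le> y \<Longrightarrow> x^2 \<le> (y::real)^2"
  by (metis abs_ge_zero abs_le_square_iff abs_of_nonneg order_trans)

lemma straight_surj:
  fixes \<alpha> k :: real and f :: gfun
  assumes k: "k > 0" and D1: "Dk \<alpha> k > 1" and fL: "L2_graph (chain_len 0) f"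
  shows "\<exists>\<psi>. H_rel (chain_len 0) \<alpha> \<psi> (\<lambda>e x. f e x + (- (k^2)) * \<psi> e x)"
proof -
  define l where "l = chain_len 0"
  have lpi: "l e = pi" for e by (simp add: l_def chain_len_0)
  have fm: "f e measurable_on {0..pi}" and fs: "(\<lambda>x. (f e x)^2) integrable_on {0..pi}" for e
    using fL unfolding L2_graph_def chain_len_0 by blast+
  define N where "N = (\<lambda>e. integral {0..pi} (\<lambda>x. (f e x)^2))"
  have Ns: "N summable_on UNIV" using fL unfolding L2_graph_def chain_len_0 N_def by auto
  have N0: "N e \<ge> 0" for e unfolding N_def by (intro integral_nonneg fs) simp
  define m where "m = (\<lambda>e. integral {0..pi} (\<lambda>x. \<bar>f e x\<bar>))"
  have fa: "f e absolutely_integrable_on {0..pi}" for e by (rule L1_le_L2(1)[OF fm fs])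
  have mN: "(m e)^2 \<le> pi * N e" for e unfolding m_def N_def by (rule L1_le_L2(2)[OF fm fs])
  have m0: "m e \<ge> 0" for e unfolding m_def
    by (intro integral_nonneg abs_int_props(2)[OF fa]) simp
  define s where "s = sinh (k*pi)"
  define c where "c = cosh (k*pi)"
  have s0: "s > 0" using k by (simp add: s_def)
  have c1: "c \<ge> 1" by (simp add: c_def cosh_real_ge_1)
  define K0 where "K0 = 2*pi*c^2"
  have K00: "K0 \<ge> 0" by (simp add: K0_def)
  define Q where "Q = (\<lambda>e. Qp k (f e))"
  define R where "R = (\<lambda>e. Rp k (f e))"
  define F where "F = (\<lambda>e. Fi (f e))"
  note EPP = ep_props[OF k fa]
  have Qb: "\<bar>Q e x\<bar> \<le> K0 * m e" if "x \<in> {0..pi}" for e x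
    using EPP(5)[OF that] by (simp add: Q_def K0_def c_def m_def)
  have Rb: "\<bar>R e pi\<bar> \<le> k * K0 * m e" for e
    using EPP(6) by (simp add: R_def K0_def c_def m_def algebra_simps)
  have Fb: "\<bar>F e pi\<bar> \<le> m e" for e using EPP(7) by (simp add: F_def m_def)
  define d0 where "d0 = (\<lambda>e. - Q e pi * k / s)"
  define d1 where "d1 = (\<lambda>e. (R e pi - F e pi) - Q e pi * k * c / s)"
  define K where "K = K0 * k / s + k * K0 + 1 + K0 * k * c / s"
  have d0b: "\<bar>d0 e\<bar> \<le> K * m e" for e
  proof -
    have "\<bar>d0 e\<bar> = \<bar>Q e pi\<bar> * k / s" using k s0 by (simp add: d0_def abs_mult)
    also have "\<dots> \<le> K0 * m e * k / s"
      using Qb[of pi e] k s0 by (simp add: divide_right_mono mult_right_mono)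
    also have "\<dots> \<le> K * m e" unfolding K_def using m0[of e] K00 k s0 c1
      by (simp add: algebra_simps mult_nonneg_nonneg)
    finally show ?thesis .
  qed
  have d1b: "\<bar>d1 e\<bar> \<le> K * m e" for e
  proof -
    have ea: "\<bar>Q e pi * k * c / s\<bar> = \<bar>Q e pi\<bar> * k * c / s" using k s0 c1 by (simp add: abs_mult)
    have "\<bar>d1 e\<bar> \<le> \<bar>R e pi\<bar> + \<bar>F e pi\<bar> + \<bar>Q e pi * k * c / s\<bar>"
      unfolding d1_def using abs_triangle_ineq4[of "R e pi - F e pi" "Q e pi * k * c / s"] abs_triangle_ineq4[of "R e pi" "F e pi"] by linarith
    hence "\<bar>d1 e\<bar> \<le> \<bar>R e pi\<bar> + \<bar>F e pi\<bar> + \<bar>Q e pi\<bar> * k * c / s" unfolding ea .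
    also have "\<dots> \<le> k * K0 * m e + m e + K0 * m e * k * c / s"
    proof -
      have "\<bar>Q e pi\<bar> * k * c / s \<le> K0 * m e * k * c / s"
        using Qb[of pi e] k s0 c1 by (simp add: divide_right_mono mult_right_mono)
      thus ?thesis using Rb[of e] Fb[of e] by linarith
    qed
    also have "\<dots> \<le> K * m e" unfolding K_def using m0[of e] K00 k s0 c1
      by (simp add: algebra_simps mult_nonneg_nonneg)
    finally show ?thesis .
  qed
  define gs where "gs = (\<lambda>j. - (s/(2*k)) * (d0 (j,True) + d0 (j,False) - d1 (j-1,True) - d1 (j-1,False)))"
  define C where "C = 4 * pi * (s/(2*k))^2 * K^2"
  have gsb: "(gs j)^2 \<le> C * (N (j,True) + N (j,False) + N (j-1,True) + N (j-1,False))" for j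
  proof -
    have "\<bar>d0 (j,True) + d0 (j,False) - d1 (j-1,True) - d1 (j-1,False)\<bar>
        \<le> K * m (j,True) + K * m (j,False) + K * m (j-1,True) + K * m (j-1,False)"
      using d0b[of "(j,True)"] d0b[of "(j,False)"] d1b[of "(j-1,True)"] d1b[of "(j-1,False)"] by linarith
    hence "(d0 (j,True) + d0 (j,False) - d1 (j-1,True) - d1 (j-1,False))^2
        \<le> (K * m (j,True) + K * m (j,False) + K * m (j-1,True) + K * m (j-1,False))^2"
      by (rule abs_sq_mono)
    also have "\<dots> \<le> 4 * ((K * m (j,True))^2 + (K * m (j,False))^2 + (K * m (j-1,True))^2 + (K * m (j-1,False))^2)"
      by (rule sq4)
    also have "\<dots> = 4 * K^2 * ((m (j,True))^2 + (m (j,False))^2 + (m (j-1,True))^2 + (m (j-1,False))^2)"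
      by (simp add: power_mult_distrib algebra_simps)
    also have "\<dots> \<le> 4 * K^2 * (pi * N (j,True) + pi * N (j,False) + pi * N (j-1,True) + pi * N (j-1,False))"
      using mN[of "(j,True)"] mN[of "(j,False)"] mN[of "(j-1,True)"] mN[of "(j-1,False)"]
      by (intro mult_left_mono) auto
    finally have h: "(d0 (j,True) + d0 (j,False) - d1 (j-1,True) - d1 (j-1,False))^2
        \<le> 4 * K^2 * (pi * N (j,True) + pi * N (j,False) + pi * N (j-1,True) + pi * N (j-1,False))" .
    have "(gs j)^2 = (s/(2*k))^2 * (d0 (j,True) + d0 (j,False) - d1 (j-1,True) - d1 (j-1,False))^2"
      unfolding gs_def by (simp only: power_mult_distrib power2_minus)
    also have "\<dots> \<le> (s/(2*k))^2 * (4 * K^2 * (pi * N (j,True) + pi * N (j,False) + pi * N (j-1,True) + pi * N (j-1,False)))"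
      by (rule mult_left_mono[OF h]) simp
    also have "\<dots> = C * (N (j,True) + N (j,False) + N (j-1,True) + N (j-1,False))"
      by (simp add: C_def algebra_simps)
    finally show ?thesis .
  qed
  have NT: "(\<lambda>j. N (j,b)) summable_on UNIV" for b by (rule summable_edge_part[OF Ns])
  have NT1: "(\<lambda>j. N (j-1,b)) summable_on UNIV" for b
    using summable_int_shift[OF NT[of b], of "-1"] by simp
  have gss: "(\<lambda>j. (gs j)^2) summable_on UNIV"
  proof (rule summable_on_comparison_test[OF _ gsb])
    show "(\<lambda>j. C * (N (j,True) + N (j,False) + N (j-1,True) + N (j-1,False))) summable_on UNIV"
      by (intro summable_on_cmult_right summable_on_add NT NT1)
  qed simp
  obtain u where urec: "\<forall>j. u (j+1) + u (j-1) - 2 * Dk \<alpha> k * u j = gs j"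
    and us: "(\<lambda>j. (u j)^2) summable_on UNIV"
    using disc_solve[OF D1 gss] by blast
  define \<psi> where "\<psi> = (\<lambda>e x. Q e x + (u (fst e) * sinh (k*(pi - x)) + (u (fst e + 1) - Q e pi) * sinh (k*x)) / s)"
  define p where "p = (\<lambda>e x. (R e x - F e x) - u (fst e) * k * cosh (k*(pi - x)) / s + (u (fst e + 1) - Q e pi) * k * cosh (k*x) / s)"
  define Rt where "Rt = (\<lambda>e x. R e x - u (fst e) * k * cosh (k*(pi - x)) / s + (u (fst e + 1) - Q e pi) * k * cosh (k*x) / s)"
  have W: "edge_W22 pi (\<psi> e) (p e) (\<lambda>x. k^2 * \<psi> e x - f e x)" for e
  proof (rule W22_forced[OF fa _ _ _ _, where R="Rt e"])
    show "(\<lambda>x. (f e x)^2) integrable_on {0..pi}" by (rule fs)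
    fix x assume x: "x \<in> {0..pi}"
    have dQ: "(Q e has_real_derivative (R e x - F e x)) (at x within {0..pi})"
      using EPP(3)[OF x] by (simp add: Q_def R_def F_def)
    have dR: "(R e has_real_derivative k^2 * Q e x) (at x within {0..pi})"
      using EPP(4)[OF x] by (simp add: Q_def R_def)
    show "(\<psi> e has_real_derivative p e x) (at x within {0..pi})"
      unfolding \<psi>_def p_def using s0
      by (auto intro!: derivative_eq_intros dQ simp: field_simps)
    show "(Rt e has_real_derivative k^2 * \<psi> e x) (at x within {0..pi})"
      unfolding \<psi>_def Rt_def using s0
      by (auto intro!: derivative_eq_intros dR simp: field_simps power2_eq_square)
    show "p e x = Rt e x - integral {0..x} (f e)"
      by (simp add: p_def Rt_def F_def Fi_def)
  qed
  have cpsi: "continuous_on {0..pi} (\<psi> e)" for e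
    unfolding \<psi>_def Q_def using s0 by (intro continuous_intros EPP(8)) simp
  have psib: "\<bar>\<psi> e x\<bar> \<le> 2 * K0 * m e + \<bar>u (fst e)\<bar> + \<bar>u (fst e + 1)\<bar>" if x: "x \<in> {0..pi}" for e x
  proof -
    have h: "\<bar>(u (fst e) * sinh (k*(pi - x)) + (u (fst e + 1) - Q e pi) * sinh (k*x)) / sinh (k * pi)\<bar>
        \<le> \<bar>u (fst e)\<bar> + \<bar>u (fst e + 1) - Q e pi\<bar>"
      by (rule harmonic_bound[OF k pi_gt_zero x])
    have h2: "\<bar>u (fst e + 1) - Q e pi\<bar> \<le> \<bar>u (fst e + 1)\<bar> + K0 * m e" using Qb[of pi e] by simp
    have eq: "\<psi> e x = Q e x + (u (fst e) * sinh (k*(pi - x)) + (u (fst e + 1) - Q e pi) * sinh (k*x)) / sinh (k * pi)"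
      unfolding \<psi>_def s_def by simp
    show ?thesis unfolding eq
      using abs_triangle_ineq[of "Q e x" "(u (fst e) * sinh (k*(pi - x)) + (u (fst e + 1) - Q e pi) * sinh (k*x)) / sinh (k * pi)"]
        h h2 Qb[OF x, of e] by linarith
  qed
  define B where "B = (\<lambda>e. pi * (3 * ((2*K0)^2 * (pi * N e) + (u (fst e))^2 + (u (fst e + 1))^2)))"
  have Ib: "integral {0..pi} (\<lambda>x. (\<psi> e x)^2) \<le> B e" for e
  proof -
    have "integral {0..pi} (\<lambda>x. (\<psi> e x)^2) \<le> pi * (3 * ((2*K0)^2 * (pi * N e) + (u (fst e))^2 + (u (fst e + 1))^2))"
    proof (rule integral_sq_le[OF _ cpsi])
      fix x assume x: "x \<in> {0..pi}"
      have "(\<psi> e x)^2 \<le> (2 * K0 * m e + \<bar>u (fst e)\<bar> + \<bar>u (fst e + 1)\<bar>)^2"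
        by (rule abs_sq_mono[OF psib[OF x]])
      also have "\<dots> \<le> 3 * ((2 * K0 * m e)^2 + (\<bar>u (fst e)\<bar>)^2 + (\<bar>u (fst e + 1)\<bar>)^2)" by (rule sq3)
      also have "\<dots> \<le> 3 * ((2*K0)^2 * (pi * N e) + (u (fst e))^2 + (u (fst e + 1))^2)"
        using mult_left_mono[OF mN[of e], of "(2*K0)^2"] by (simp add: power_mult_distrib)
      finally show "(\<psi> e x)^2 \<le> 3 * ((2*K0)^2 * (pi * N e) + (u (fst e))^2 + (u (fst e + 1))^2)" .
    qed simp
    thus ?thesis by (simp add: B_def)
  qed
  have Bs: "B summable_on UNIV"
    unfolding B_def
    by (intro summable_on_cmult_right summable_on_add Ns summable_int_edge us summable_int_shift[of "\<lambda>j. (u j)^2", simplified])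
  have L2psi: "L2_graph l \<psi>" unfolding lpi by (rule L2_from_bound[OF cpsi Ib Bs])
  define \<phi> where "\<phi> = (\<lambda>e x. f e x + (- (k^2)) * \<psi> e x)"
  have L2phi: "L2_graph l \<phi>"
    unfolding L2_graph_def lpi
  proof (intro conjI allI)
    fix e
    have mpsi: "\<psi> e measurable_on {0..pi}"
      using cpsi[of e] by (simp add: measurable_on_iff_borel_measurable continuous_imp_measurable_on_sets_lebesgue)
    show mphi: "\<phi> e measurable_on {0..pi}" unfolding \<phi>_def
      by (intro measurable_on_add fm measurable_on_cmul mpsi)
    have i2: "(\<lambda>x. 2 * (f e x)^2 + 2 * (k^2 * \<psi> e x)^2) integrable_on {0..pi}"
    proof (rule integrable_add)
      show "(\<lambda>x. 2 * (f e x)^2) integrable_on {0..pi}" using integrable_on_cmult_left[OF fs[of e], of 2] by simp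
      show "(\<lambda>x. 2 * (k^2 * \<psi> e x)^2) integrable_on {0..pi}"
        by (intro integrable_continuous_real continuous_intros cpsi)
    qed
    have bd: "(\<phi> e x)^2 \<le> 2 * (f e x)^2 + 2 * (k^2 * \<psi> e x)^2" for x
      unfolding \<phi>_def using sq_add_le[of "f e x" "- (k^2) * \<psi> e x"] by simp
    have mb: "(\<lambda>x. (\<phi> e x)^2) \<in> borel_measurable (lebesgue_on {0..pi})"
    proof -
      have "\<phi> e \<in> borel_measurable (lebesgue_on {0..pi})" using mphi by (simp add: measurable_on_iff_borel_measurable)
      thus ?thesis by measurable
    qed
    show phi2: "(\<lambda>x. (\<phi> e x)^2) integrable_on {0..pi}"
      by (rule measurable_bounded_by_integrable_imp_integrable_real[OF mb i2]) (use bd in auto)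
  next
    show "(\<lambda>e. integral {0..pi} (\<lambda>x. (\<phi> e x)^2)) summable_on UNIV"
    proof (rule summable_on_comparison_test)
      show "(\<lambda>e. 2 * N e + 2 * k^4 * B e) summable_on UNIV"
        by (intro summable_on_add summable_on_cmult_right Ns Bs)
      fix e
      have mpsi: "\<psi> e measurable_on {0..pi}"
        using cpsi[of e] by (simp add: measurable_on_iff_borel_measurable continuous_imp_measurable_on_sets_lebesgue)
      have "\<phi> e measurable_on {0..pi}" unfolding \<phi>_def
        by (intro measurable_on_add fm measurable_on_cmul mpsi)
      hence mphi: "\<phi> e \<in> borel_measurable (lebesgue_on {0..pi})" by (simp add: measurable_on_iff_borel_measurable)
      have mb: "(\<lambda>x. (\<phi> e x)^2) \<in> borel_measurable (lebesgue_on {0..pi})" using mphi by measurable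
      have ipsi: "(\<lambda>x. (\<psi> e x)^2) integrable_on {0..pi}" by (intro integrable_continuous_real continuous_intros cpsi)
      have i2: "(\<lambda>x. 2 * (f e x)^2 + 2 * k^4 * (\<psi> e x)^2) integrable_on {0..pi}"
      proof (rule integrable_add)
        show "(\<lambda>x. 2 * (f e x)^2) integrable_on {0..pi}" using integrable_on_cmult_left[OF fs[of e], of 2] by simp
        show "(\<lambda>x. 2 * k^4 * (\<psi> e x)^2) integrable_on {0..pi}" using integrable_on_cmult_left[OF ipsi, of "2*k^4"] by simp
      qed
      have bd: "(\<phi> e x)^2 \<le> 2 * (f e x)^2 + 2 * k^4 * (\<psi> e x)^2" for x
        unfolding \<phi>_def using sq_add_le[of "f e x" "- (k^2) * \<psi> e x"] by (simp add: power_mult_distrib)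
      have phi2: "(\<lambda>x. (\<phi> e x)^2) integrable_on {0..pi}"
        by (rule measurable_bounded_by_integrable_imp_integrable_real[OF mb i2]) (use bd in auto)
      have "integral {0..pi} (\<lambda>x. (\<phi> e x)^2) \<le> integral {0..pi} (\<lambda>x. 2 * (f e x)^2 + 2 * k^4 * (\<psi> e x)^2)"
        by (rule integral_le[OF phi2 i2 bd])
      also have "\<dots> = 2 * N e + 2 * k^4 * integral {0..pi} (\<lambda>x. (\<psi> e x)^2)"
      proof -
        have a: "(\<lambda>x. 2 * (f e x)^2) integrable_on {0..pi}" using integrable_on_cmult_left[OF fs[of e], of 2] by simp
        have b: "(\<lambda>x. 2 * k^4 * (\<psi> e x)^2) integrable_on {0..pi}" using integrable_on_cmult_left[OF ipsi, of "2*k^4"] by simp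
        show ?thesis using integral_add[OF a b] by (simp add: N_def)
      qed
      also have "\<dots> \<le> 2 * N e + 2 * k^4 * B e" using mult_left_mono[OF Ib[of e], of "2*k^4"] by simp
      finally show "integral {0..pi} (\<lambda>x. (\<phi> e x)^2) \<le> 2 * N e + 2 * k^4 * B e" .
      show "0 \<le> integral {0..pi} (\<lambda>x. (\<phi> e x)^2)" by (intro integral_nonneg phi2) simp
    qed
  qed
  have Qpi0: "Q e 0 = 0" for e using EPP(1) by (simp add: Q_def)
  have Rpi0: "R e 0 = 0" for e using EPP(2) by (simp add: R_def)
  have F0: "F e 0 = 0" for e by (simp add: F_def Fi_def)
  have v0: "\<psi> (j,b) 0 = u j" for j b using s0 k by (simp add: \<psi>_def Qpi0 s_def)
  have v1: "\<psi> (j,b) pi = u (j+1)" for j b using s0 k by (simp add: \<psi>_def s_def)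
  have p0: "p (j,b) 0 = k * (u (j+1) - c * u j) / s + d0 (j,b)" for j b
    using s0 k by (simp add: p_def d0_def Rpi0 F0 c_def field_simps)
  have p1: "p (j,b) pi = k * (c * u (j+1) - u j) / s + d1 (j,b)" for j b
    using s0 k by (simp add: p_def d1_def c_def field_simps)
  have dc: "delta_cond l \<alpha> \<psi> p"
    unfolding delta_cond_def lpi
  proof (intro allI conjI)
    fix j :: int
    show "\<psi> (j - 1, True) pi = \<psi> (j, True) 0" "\<psi> (j - 1, False) pi = \<psi> (j, True) 0"
      "\<psi> (j, False) 0 = \<psi> (j, True) 0" by (simp_all add: v0 v1)
    have sd: "d0 (j,True) + d0 (j,False) - d1 (j-1,True) - d1 (j-1,False) = - (2*k/s) * gs j"
      unfolding gs_def using k s0 by (simp add: field_simps)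
    have ur: "u (j+1) + u (j-1) - 2*c*u j = \<alpha> * s / (2*k) * u j + gs j"
      using urec[rule_format, of j] k unfolding Dk_def c_def s_def by (simp add: field_simps)
    have "p (j, True) 0 + p (j, False) 0 - p (j - 1, True) pi - p (j - 1, False) pi
        = (2*k/s) * (u (j+1) + u (j-1) - 2*c*u j) + (d0 (j,True) + d0 (j,False) - d1 (j-1,True) - d1 (j-1,False))"
      unfolding p0 p1 using s0 by (simp add: field_simps)
    also have "\<dots> = \<alpha> * u j" unfolding sd ur using k s0 by (simp add: field_simps)
    finally show "p (j, True) 0 + p (j, False) 0 - p (j - 1, True) pi - p (j - 1, False) pi = \<alpha> * \<psi> (j, True) 0"
      by (simp add: v0)
  qed
  have Wall: "\<forall>e. edge_W22 (l e) (\<psi> e) (p e) (\<lambda>x. k^2 * \<psi> e x - f e x)" using W by (simp add: lpi)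
  have ae: "ae_eq_graph l \<phi> (\<lambda>e x. - (k^2 * \<psi> e x - f e x))"
    unfolding ae_eq_graph_def \<phi>_def by simp
  have "H_rel l \<alpha> \<psi> \<phi>"
    unfolding H_rel_def
    apply (intro conjI L2psi L2phi)
    apply (rule exI[where x=p])
    apply (rule exI[where x="\<lambda>e x. k^2 * \<psi> e x - f e x"])
    using Wall ae dc by simp
  thus ?thesis unfolding l_def \<phi>_def by blast
qed


lemma resolvent_straight:
  fixes \<alpha> k :: real
  assumes k: "k > 0" and D1: "Dk \<alpha> k > 1"
  shows "- (k^2) \<in> chain_resolvent (chain_len 0) \<alpha>"
  unfolding chain_resolvent_def
proof (intro CollectI conjI allI impI)
  fix f assume "L2_graph (chain_len 0) f"
  from straight_surj[OF k D1 this]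
  show "\<exists>\<psi>. H_rel (chain_len 0) \<alpha> \<psi> (\<lambda>e x. f e x + - (k^2) * \<psi> e x)" .
next
  fix \<psi> assume "H_rel (chain_len 0) \<alpha> \<psi> (\<lambda>e x. - (k^2) * \<psi> e x)"
  moreover have "cosh (k*pi) + \<alpha> * sinh (k*pi) / (4*k) > 1" using D1 by (simp add: Dk_def)
  ultimately show "ae_eq_graph (chain_len 0) \<psi> (\<lambda>e x. 0)" using straight_inj[OF k] by blast
qed

theorem corollary3p4:
  fixes \<alpha> \<theta> :: real
  assumes "0 < \<theta>" and "\<theta> < pi"
  shows "(\<alpha> \<ge> 0 \<longrightarrow> (\<forall>E. even_eigenvalue \<theta> \<alpha> E \<longrightarrow> E \<ge> 0)) \<and>
         (\<alpha> < 0 \<longrightarrow> (\<forall>\<kappa>\<^sub>0 > 0. \<kappa>\<^sub>0 * tanh (\<kappa>\<^sub>0 * pi) = - \<alpha> / 2 \<longrightarrow>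
            (\<exists>E. even_eigenvalue \<theta> \<alpha> E \<and> E < 0 \<and> - (\<kappa>\<^sub>0 ^ 2) < E \<and>
                 (\<forall>\<mu> \<in> chain_spectrum (chain_len 0) \<alpha>. E < \<mu>))))"
proof (intro conjI impI allI)
  fix E assume "\<alpha> \<ge> 0" "even_eigenvalue \<theta> \<alpha> E"
  thus "E \<ge> 0" using part1[OF assms] by blast
next
  fix \<kappa>0 :: real
  assume a: "\<alpha> < 0" and k0: "\<kappa>0 > 0" and kt: "\<kappa>0 * tanh (\<kappa>0 * pi) = - \<alpha> / 2"
  obtain k where k: "0 < k" "k < \<kappa>0" and Dall: "\<forall>k'\<ge>k. Dk \<alpha> k' > 1" and P: "Phi \<alpha> \<theta> k = 0"
    using root_exists[OF a assms k0 kt] by blast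
  have ev: "even_eigenvalue \<theta> \<alpha> (- (k^2))"
    by (rule eigen_construct[OF assms k(1) _ P]) (use Dall in auto)
  have neg: "- (k^2) < 0" using k by simp
  have gt: "- (\<kappa>0^2) < - (k^2)" using k by (simp add: power_strict_mono)
  have sp: "\<forall>\<mu> \<in> chain_spectrum (chain_len 0) \<alpha>. - (k^2) < \<mu>"
  proof
    fix \<mu> assume mu: "\<mu> \<in> chain_spectrum (chain_len 0) \<alpha>"
    show "- (k^2) < \<mu>"
    proof (rule ccontr)
      assume "\<not> - (k^2) < \<mu>"
      hence le: "\<mu> \<le> - (k^2)" by simp
      define k' where "k' = sqrt (- \<mu>)"
      have "k^2 \<le> - \<mu>" using le by simp
      hence kk: "k \<le> k'" unfolding k'_def using k by (metis real_sqrt_le_mono real_sqrt_pow2_iff abs_of_pos real_sqrt_abs power2_eq_square less_imp_le)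
      have k'0: "k' > 0" using kk k by simp
      have mk: "\<mu> = - (k'^2)" unfolding k'_def using le k by (smt (verit) real_sqrt_pow2 zero_less_power)
      have "\<mu> \<in> chain_resolvent (chain_len 0) \<alpha>"
        unfolding mk by (rule resolvent_straight[OF k'0]) (use Dall kk in auto)
      thus False using mu by (simp add: chain_spectrum_def)
    qed
  qed
  show "\<exists>E. even_eigenvalue \<theta> \<alpha> E \<and> E < 0 \<and> - (\<kappa>0 ^ 2) < E \<and>
                 (\<forall>\<mu> \<in> chain_spectrum (chain_len 0) \<alpha>. E < \<mu>)"
    using ev neg gt sp by blast
qed


end
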